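(* The bracket $\{\cdot,\cdot\}_{2\alpha}$ induced on $\mathbf{RT}_{m+1}$ by $\alpha\,{\rm PB}_2(\mathbf A_1,\mathbf A_2,\mathbf S)$, in the coordinates $d_k,c_k^{(j)}$ ($1\le j\le m$), is given by: $\{d_k,d_l\}_{2\alpha}=0$ for all $k,l$; $\{d_k,c_k^{(j)}\}_{2\alpha}=-c_k^{(j)}(1+\alpha d_k)$, $\{c_k^{(j)},d_{k+j}\}_{2\alpha}=-c_k^{(j)}(1+\alpha d_{k+j})$; $\{c_k^{(i)},c_{k+i}^{(j)}\}_{2\alpha}=-c_k^{(i+j)}-\alpha c_k^{(i)}c_{k+i}^{(j)}$; for $i\le j$ and $1\le\ell\le i-1$: $\{c_k^{(i)},c_{k+\ell}^{(j)}\}_{2\alpha}=-\alpha c_k^{(i)}c_{k+\ell}^{(j)}+\alpha c_k^{(j+\ell)}c_{k+\ell}^{(i-\ell)}$; for $i\le j$ and $j-i+1\le\ell\le j-1$: $\{c_k^{(j)},c_{k+\ell}^{(i)}\}_{2\alpha}=-\alpha c_k^{(j)}c_{k+\ell}^{(i)}+\alpha c_k^{(i+\ell)}c_{k+\ell}^{(j-\ell)}$; all other brackets between coordinates (except those obtained by antisymmetry) vanish. (Here $N\ge2m+2$.)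
   Context: Setting as follows. Periodic lattice: $N\ge2m+2$, $m\ge1$, $\alpha\ne0$ real, subscripts modulo $N$; $\mathfrak g$ the twisted loop algebra $\{X(\lambda)\in gl(N)[\lambda,\lambda^{-1}]:\Omega X\Omega^{-1}=X(\omega\lambda)\}$ ($\omega=e^{2\pi i/N}$, $\Omega=\mathrm{diag}(1,\omega,\dots,\omega^{N-1})$), tacitly completed for formal inverses, $\langle X,Y\rangle$ = $\lambda^0$-coefficient of $\mathrm{tr}(XY)$; ${\rm A}_1={\rm R}_0+W$, ${\rm A}_2={\rm R}_0-W$, ${\rm S}=P_0-W$, ${\rm S}^*=P_0+W$ where $P_0,P_{>0},P_{<0}$ are projections on degree $0$, positive, negative $\lambda$-degree parts, ${\rm R}_0=P_{>0}-P_{<0}$, $W=W\circ P_0$, $W(E_{kk})=\sum_j\mathrm{sgn}(k-j)E_{jj}$. On $\mathfrak g\times\mathfrak g$ the bracket ${\rm PB}_2(\mathbf A_1,\mathbf A_2,\mathbf S)$ is $\{\Phi,\Psi\}=\frac12\sum_{i,j=1}^2[\langle(\mathbf A_1)_{ij}d'_j\Phi,d'_i\Psi\rangle-\langle(\mathbf A_2)_{ij}d_j\Phi,d_i\Psi\rangle+\langle(\mathbf S)_{ij}d_j\Phi,d'_i\Psi\rangle-\langle(\mathbf S^* )_{ij}d'_j\Phi,d_i\Psi\rangle]$, with $d_j\Phi=L_j\nabla_j\Phi$, $d'_j\Phi=\nabla_j\Phi L_j$ ($\nabla_j$ the partial gradient w.r.t. $\langle\cdot,\cdot\rangle$), and blocks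 $\mathbf A_1=\begin{pmatrix}{\rm A}_1&-{\rm S}\\{\rm S}^*&{\rm A}_1\end{pmatrix}$, $\mathbf A_2=\begin{pmatrix}{\rm A}_2&-{\rm S}^*\\{\rm S}&{\rm A}_2\end{pmatrix}$, $\mathbf S=\begin{pmatrix}{\rm S}&{\rm S}\\{\rm S}&-{\rm S}^*\end{pmatrix}$, $\mathbf S^*=\begin{pmatrix}{\rm S}^*&{\rm S}^*\\{\rm S}^*&-{\rm S}\end{pmatrix}$. $\mathbf{RT}_{m+1}$ = set of pairs $(L,U^{-1})$ with $L=\sum_k(1+\alpha d_k)E_{kk}+\alpha\lambda\sum_kE_{k+1,k}$, $U=I-\alpha\sum_{j=1}^m\lambda^{-j}\sum_kc_k^{(j)}E_{k,k+j}$; it is a Poisson submanifold, parametrized by $(d,c^{(1)},\dots,c^{(m)})\in\mathbb R^{(m+1)N}$. Convention: $c_k^{(p)}=0$ for $p>m$. *)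

theory Defs
  imports Complex_Main
begin

text \<open>Elements of the (completed) twisted loop algebra: coefficient functions
  X n i j = coefficient of lambda^n in the (i,j) entry, 0 <= i,j < N.\<close>

type_synonym lmat = "int \<Rightarrow> nat \<Rightarrow> nat \<Rightarrow> real"

definition in_g :: "nat \<Rightarrow> lmat \<Rightarrow> bool" where
  "in_g N X \<longleftrightarrow>
     (\<forall>n i j. X n i j \<noteq> 0 \<longrightarrow> i < N \<and> j < N \<and> n mod int N = (int i - int j) mod int N)
   \<and> (\<exists>b. \<forall>n i j. n > b \<longrightarrow> X n i j = 0)"

definition lmul :: "nat \<Rightarrow> lmat \<Rightarrow> lmat \<Rightarrow> lmat" where
  "lmul N X Y = (\<lambda>n i j. \<Sum>k<N. \<Sum>p\<in>{p. X p i k \<noteq> 0 \<and> Y (n - p) k j \<noteq> 0}. X p i k * Y (n - p) k j)"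

text \<open>Pairing: lambda^0 coefficient of tr(XY).\<close>
definition lpair :: "nat \<Rightarrow> lmat \<Rightarrow> lmat \<Rightarrow> real" where
  "lpair N X Y = (\<Sum>i<N. \<Sum>j<N. \<Sum>p\<in>{p. X p i j \<noteq> 0 \<and> Y (- p) j i \<noteq> 0}. X p i j * Y (- p) j i)"

definition lone :: "nat \<Rightarrow> lmat" where
  "lone N = (\<lambda>n i j. if n = 0 \<and> i = j \<and> i < N then 1 else 0)"

definition ladd :: "lmat \<Rightarrow> lmat \<Rightarrow> lmat" where
  "ladd X Y = (\<lambda>n i j. X n i j + Y n i j)"

definition lsmul :: "real \<Rightarrow> lmat \<Rightarrow> lmat" where
  "lsmul t X = (\<lambda>n i j. t * X n i j)"

definition lneg :: "lmat \<Rightarrow> lmat" where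
  "lneg X = (\<lambda>n i j. - X n i j)"

definition linv :: "nat \<Rightarrow> lmat \<Rightarrow> lmat" where
  "linv N X = (THE Z. in_g N Z \<and> lmul N Z X = lone N \<and> lmul N X Z = lone N)"

definition P0 :: "lmat \<Rightarrow> lmat" where
  "P0 X = (\<lambda>n i j. if n = 0 then X n i j else 0)"
definition Ppos :: "lmat \<Rightarrow> lmat" where
  "Ppos X = (\<lambda>n i j. if n > 0 then X n i j else 0)"
definition Pneg :: "lmat \<Rightarrow> lmat" where
  "Pneg X = (\<lambda>n i j. if n < 0 then X n i j else 0)"
definition R0 :: "lmat \<Rightarrow> lmat" where
  "R0 X = ladd (Ppos X) (lneg (Pneg X))"

definition Wop :: "nat \<Rightarrow> lmat \<Rightarrow> lmat" where
  "Wop N X = (\<lambda>n i j. if n = 0 \<and> i = j \<and> i < N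
        then (\<Sum>k<N. sgn (real k - real i) * X 0 k k) else 0)"

definition Sop :: "nat \<Rightarrow> lmat \<Rightarrow> lmat" where
  "Sop N X = ladd (P0 X) (lneg (Wop N X))"
definition Sst :: "nat \<Rightarrow> lmat \<Rightarrow> lmat" where
  "Sst N X = ladd (P0 X) (Wop N X)"
definition Aone :: "nat \<Rightarrow> lmat \<Rightarrow> lmat" where
  "Aone N X = ladd (R0 X) (Wop N X)"
definition Atwo :: "nat \<Rightarrow> lmat \<Rightarrow> lmat" where
  "Atwo N X = ladd (R0 X) (lneg (Wop N X))"

definition bA1 :: "nat \<Rightarrow> nat \<Rightarrow> nat \<Rightarrow> lmat \<Rightarrow> lmat" where
  "bA1 N i j = (if i = 1 \<and> j = 1 then Aone N else if i = 1 \<and> j = 2 then (\<lambda>X. lneg (Sop N X))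
     else if i = 2 \<and> j = 1 then Sst N else Aone N)"
definition bA2 :: "nat \<Rightarrow> nat \<Rightarrow> nat \<Rightarrow> lmat \<Rightarrow> lmat" where
  "bA2 N i j = (if i = 1 \<and> j = 1 then Atwo N else if i = 1 \<and> j = 2 then (\<lambda>X. lneg (Sst N X))
     else if i = 2 \<and> j = 1 then Sop N else Atwo N)"
definition bS :: "nat \<Rightarrow> nat \<Rightarrow> nat \<Rightarrow> lmat \<Rightarrow> lmat" where
  "bS N i j = (if i = 2 \<and> j = 2 then (\<lambda>X. lneg (Sst N X)) else Sop N)"
definition bSst :: "nat \<Rightarrow> nat \<Rightarrow> nat \<Rightarrow> lmat \<Rightarrow> lmat" where
  "bSst N i j = (if i = 2 \<and> j = 2 then (\<lambda>X. lneg (Sop N X)) else Sst N)"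

definition comp :: "nat \<Rightarrow> lmat \<times> lmat \<Rightarrow> lmat" where
  "comp k P = (if k = 1 then fst P else snd P)"

text \<open>PB_2(A1,A2,S) at point P=(L1,L2), evaluated on gradients G=(grad_1 Phi, grad_2 Phi),
  H=(grad_1 Psi, grad_2 Psi); d_j = L_j grad_j, d'_j = grad_j L_j.\<close>
definition pb2 :: "nat \<Rightarrow> lmat \<times> lmat \<Rightarrow> lmat \<times> lmat \<Rightarrow> lmat \<times> lmat \<Rightarrow> real" where
  "pb2 N P G H = (let
      dd = (\<lambda>j Q. lmul N (comp j P) (comp j Q));
      dp = (\<lambda>j Q. lmul N (comp j Q) (comp j P))
    in 1/2 * (\<Sum>i\<in>{1,2}. \<Sum>j\<in>{1,2}.
         lpair N (bA1 N i j (dp j G)) (dp i H)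
       - lpair N (bA2 N i j (dd j G)) (dd i H)
       + lpair N (bS N i j (dd j G)) (dp i H)
       - lpair N (bSst N i j (dp j G)) (dd i H)))"

definition has_grad :: "nat \<Rightarrow> (lmat \<times> lmat \<Rightarrow> real) \<Rightarrow> lmat \<times> lmat \<Rightarrow> lmat \<times> lmat \<Rightarrow> bool" where
  "has_grad N \<Phi> P G \<longleftrightarrow> in_g N (fst G) \<and> in_g N (snd G) \<and>
     (\<forall>V. in_g N V \<longrightarrow>
        ((\<lambda>t. \<Phi> (ladd (fst P) (lsmul t V), snd P)) has_real_derivative lpair N (fst G) V) (at 0)
      \<and> ((\<lambda>t. \<Phi> (fst P, ladd (snd P) (lsmul t V))) has_real_derivative lpair N (snd G) V) (at 0))"

definition grad :: "nat \<Rightarrow> (lmat \<times> lmat \<Rightarrow> real) \<Rightarrow> lmat \<times> lmat \<Rightarrow> lmat \<times> lmat" where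
  "grad N \<Phi> P = (THE G. has_grad N \<Phi> P G)"

text \<open>The manifold RT_{m+1}: L and U.  d k = d_k, c j k = c_k^{(j)} (0 <= k < N).\<close>
definition Lmat :: "nat \<Rightarrow> real \<Rightarrow> (nat \<Rightarrow> real) \<Rightarrow> lmat" where
  "Lmat N \<alpha> d = (\<lambda>n i j. if i < N \<and> j < N then
      (if n = 0 \<and> i = j then 1 + \<alpha> * d i
       else if n = 1 \<and> i = (j + 1) mod N then \<alpha> else 0) else 0)"

definition Umat :: "nat \<Rightarrow> nat \<Rightarrow> real \<Rightarrow> (nat \<Rightarrow> nat \<Rightarrow> real) \<Rightarrow> lmat" where
  "Umat N m \<alpha> c = (\<lambda>n i j. lone N n i j - \<alpha> *
      (if i < N \<and> j < N \<and> - int m \<le> n \<and> n \<le> -1 \<and> j = (i + nat (- n)) mod N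
       then c (nat (- n)) i else 0))"

definition RTpt :: "nat \<Rightarrow> nat \<Rightarrow> real \<Rightarrow> (nat \<Rightarrow> real) \<Rightarrow> (nat \<Rightarrow> nat \<Rightarrow> real) \<Rightarrow> lmat \<times> lmat" where
  "RTpt N m \<alpha> d c = (Lmat N \<alpha> d, linv N (Umat N m \<alpha> c))"

text \<open>Coordinates: Dc k = d_k, Cc j k = c_k^{(j)}.\<close>
datatype coord = Dc nat | Cc nat nat

definition valid_coord :: "nat \<Rightarrow> nat \<Rightarrow> coord \<Rightarrow> bool" where
  "valid_coord N m x = (case x of Dc k \<Rightarrow> k < N | Cc j k \<Rightarrow> 1 \<le> j \<and> j \<le> m \<and> k < N)"

definition ltrunc :: "lmat \<Rightarrow> lmat" where
  "ltrunc X = (\<lambda>n i j. if n \<le> 0 then X n i j else 0)"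

text \<open>Extensions of the coordinate functions to g x g: d_k from the lambda^0 diagonal
  of the first factor; c_k^{(j)} from U = (second factor)^{-1} (nonpositive part inverted).\<close>
definition coordfun :: "nat \<Rightarrow> real \<Rightarrow> coord \<Rightarrow> lmat \<times> lmat \<Rightarrow> real" where
  "coordfun N \<alpha> x P = (case x of
      Dc k \<Rightarrow> (fst P 0 k k - 1) / \<alpha>
    | Cc j k \<Rightarrow> - (linv N (ltrunc (snd P)) (- int j) k ((k + j) mod N)) / \<alpha>)"

definition rtbr :: "nat \<Rightarrow> nat \<Rightarrow> real \<Rightarrow> (nat \<Rightarrow> real) \<Rightarrow> (nat \<Rightarrow> nat \<Rightarrow> real) \<Rightarrow> coord \<Rightarrow> coord \<Rightarrow> real" where
  "rtbr N m \<alpha> d c x y = (let P = RTpt N m \<alpha> d c in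
      \<alpha> * pb2 N P (grad N (coordfun N \<alpha> x) P) (grad N (coordfun N \<alpha> y) P))"

definition cv :: "nat \<Rightarrow> (nat \<Rightarrow> nat \<Rightarrow> real) \<Rightarrow> nat \<Rightarrow> nat \<Rightarrow> real" where
  "cv m c p k = (if 1 \<le> p \<and> p \<le> m then c p k else 0)"

definition listed :: "nat \<Rightarrow> coord \<Rightarrow> coord \<Rightarrow> bool" where
  "listed N x y \<longleftrightarrow>
     (\<exists>k j. x = Dc k \<and> y = Cc j k)
   \<or> (\<exists>k j. x = Cc j k \<and> y = Dc ((k + j) mod N))
   \<or> (\<exists>i j k. x = Cc i k \<and> y = Cc j ((k + i) mod N))
   \<or> (\<exists>i j k l. i \<le> j \<and> 1 \<le> l \<and> l \<le> i - 1 \<and> x = Cc i k \<and> y = Cc j ((k + l) mod N))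
   \<or> (\<exists>i j k l. i \<le> j \<and> j - i + 1 \<le> l \<and> l \<le> j - 1 \<and> x = Cc j k \<and> y = Cc i ((k + l) mod N))"

end

theory Submission
  imports Defs "HOL-Library.Groups_Big_Fun"
begin


definition vb :: "int \<Rightarrow> lmat \<Rightarrow> bool" where
  "vb B X \<longleftrightarrow> (\<forall>n i j. B < n \<longrightarrow> X n i j = 0)"
definition sqN :: "nat \<Rightarrow> lmat \<Rightarrow> bool" where
  "sqN N X \<longleftrightarrow> (\<forall>n i j. X n i j \<noteq> 0 \<longrightarrow> i < N \<and> j < N)"
definition tw :: "nat \<Rightarrow> lmat \<Rightarrow> bool" where
  "tw N X \<longleftrightarrow> (\<forall>n i j. X n i j \<noteq> 0 \<longrightarrow> n mod int N = (int i - int j) mod int N)"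

lemma in_g_iff: "in_g N X \<longleftrightarrow> sqN N X \<and> tw N X \<and> (\<exists>B. vb B X)"
  unfolding in_g_def sqN_def tw_def vb_def by blast

lemma vb_mono: "vb B X \<Longrightarrow> B \<le> C \<Longrightarrow> vb C X"
  unfolding vb_def by auto

lemma vbD: "vb B X \<Longrightarrow> X n i j \<noteq> 0 \<Longrightarrow> n \<le> B"
  unfolding vb_def by force

lemma lmul_SA: "lmul N X Y n i j = (\<Sum>k<N. Sum_any (\<lambda>p. X p i k * Y (n - p) k j))"
  unfolding lmul_def Sum_any.expand_set by simp

lemma lpair_SA: "lpair N X Y = (\<Sum>i<N. \<Sum>j<N. Sum_any (\<lambda>p. X p i j * Y (- p) j i))"
  unfolding lpair_def Sum_any.expand_set by simp

lemma fin_win: "(\<And>p. f p \<noteq> 0 \<Longrightarrow> a \<le> p \<and> p \<le> b) \<Longrightarrow> finite {p::int. f p \<noteq> 0}"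
  by (rule finite_subset[of _ "{a..b}"]) auto

lemma SA_win: "finite A \<Longrightarrow> (\<And>p. p \<notin> A \<Longrightarrow> f p = 0) \<Longrightarrow> Sum_any f = sum f A"
  by (rule Sum_any.expand_superset) auto

lemma SA_mult_right: "Sum_any f * (c::real) = Sum_any (\<lambda>p. f p * c)"
proof (cases "c = 0")
  case False
  then have "{p. f p * c \<noteq> 0} = {p. f p \<noteq> 0}" by auto
  then show ?thesis unfolding Sum_any.expand_set by (simp add: sum_distrib_right)
qed simp

lemma SA_mult_left: "(c::real) * Sum_any f = Sum_any (\<lambda>p. c * f p)"
  using SA_mult_right[of f c] by (simp add: mult.commute)

lemma SA_neg: "Sum_any (\<lambda>p. - f p) = - (Sum_any f :: real)"
  using SA_mult_right[of f "-1"] by simp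

lemma SA_add: "finite {p. f p \<noteq> 0} \<Longrightarrow> finite {p. g p \<noteq> 0} \<Longrightarrow>
   Sum_any (\<lambda>p. f p + g p) = Sum_any f + (Sum_any g :: real)"
  by (rule Sum_any.distrib)

lemma SA_sum_swap:
  assumes "finite I" "\<And>k. k \<in> I \<Longrightarrow> finite {p. f k p \<noteq> (0::real)}"
  shows "Sum_any (\<lambda>p. \<Sum>k\<in>I. f k p) = (\<Sum>k\<in>I. Sum_any (f k))"
proof -
  let ?A = "\<Union>k\<in>I. {p. f k p \<noteq> 0}"
  have fA: "finite ?A" using assms by auto
  have "Sum_any (\<lambda>p. \<Sum>k\<in>I. f k p) = (\<Sum>p\<in>?A. \<Sum>k\<in>I. f k p)"
    by (rule SA_win[OF fA]) (auto intro: sum.neutral)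
  also have "\<dots> = (\<Sum>k\<in>I. \<Sum>p\<in>?A. f k p)" by (rule sum.swap)
  also have "\<dots> = (\<Sum>k\<in>I. Sum_any (f k))"
    by (rule sum.cong[OF refl], rule SA_win[symmetric, OF fA]) auto
  finally show ?thesis .
qed

lemma SA_swap2:
  assumes "finite A" "finite B" "\<And>p q. g p q \<noteq> (0::real) \<Longrightarrow> p \<in> A \<and> q \<in> B"
  shows "Sum_any (\<lambda>p. Sum_any (\<lambda>q. g p q)) = Sum_any (\<lambda>q. Sum_any (\<lambda>p. g p q))"
proof -
  have z1: "Sum_any (\<lambda>q. g p q) = 0" if "p \<notin> A" for p
  proof -
    have "(\<lambda>q. g p q) = (\<lambda>q. 0)" using assms(3) that by fastforce
    then show ?thesis by simp
  qed
  have z2: "Sum_any (\<lambda>p. g p q) = 0" if "q \<notin> B" for q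
  proof -
    have "(\<lambda>p. g p q) = (\<lambda>p. 0)" using assms(3) that by fastforce
    then show ?thesis by (metis Sum_any.neutral)
  qed
  have "Sum_any (\<lambda>p. Sum_any (\<lambda>q. g p q)) = (\<Sum>p\<in>A. Sum_any (\<lambda>q. g p q))"
    by (rule SA_win[OF assms(1) z1])
  also have "\<dots> = (\<Sum>p\<in>A. \<Sum>q\<in>B. g p q)"
    by (rule sum.cong[OF refl], rule SA_win[OF assms(2)]) (use assms(3) in blast)
  also have "\<dots> = (\<Sum>q\<in>B. \<Sum>p\<in>A. g p q)" by (rule sum.swap)
  also have "\<dots> = (\<Sum>q\<in>B. Sum_any (\<lambda>p. g p q))"
    by (rule sum.cong[OF refl], rule SA_win[symmetric, OF assms(1)]) (use assms(3) in blast)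
  also have "\<dots> = Sum_any (\<lambda>q. Sum_any (\<lambda>p. g p q))"
    by (rule SA_win[symmetric, OF assms(2) z2])
  finally show ?thesis .
qed

lemma SA_shift: "Sum_any (\<lambda>r::int. f r) = Sum_any (\<lambda>q. f (q - c))"
proof (rule Sum_any.reindex_cong[of "\<lambda>q. q - c"])
  show "bij (\<lambda>q::int. q - c)" by (rule bij_betw_byWitness[of _ "\<lambda>q. q + c"]) auto
qed auto

lemma SA_delta': "(\<And>p. p \<noteq> a \<Longrightarrow> f p = 0) \<Longrightarrow> Sum_any f = (f a :: real)"
  using SA_win[of "{a}" f] by auto

lemma SA_delta: "Sum_any (\<lambda>p. if p = a then f p else (0::real)) = f a"
  by simp


lemma lmul_nz: "lmul N X Y n i j \<noteq> 0 \<Longrightarrow> \<exists>k<N. \<exists>p. X p i k \<noteq> 0 \<and> Y (n - p) k j \<noteq> 0"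
proof -
  assume a: "lmul N X Y n i j \<noteq> 0"
  obtain k where k: "k \<in> {..<N}" and s: "(\<Sum>p\<in>{p. X p i k \<noteq> 0 \<and> Y (n - p) k j \<noteq> 0}. X p i k * Y (n - p) k j) \<noteq> 0"
    using sum.not_neutral_contains_not_neutral[OF a[unfolded lmul_def]] by blast
  obtain p where "p \<in> {p. X p i k \<noteq> 0 \<and> Y (n - p) k j \<noteq> 0}"
    using sum.not_neutral_contains_not_neutral[OF s] by blast
  then show ?thesis using k by auto
qed

lemma vb_lmul:
  assumes vX: "vb B X" and vY: "vb C Y"
  shows "vb (B + C) (lmul N X Y)"
  unfolding vb_def
proof (intro allI impI)
  fix n i j assume n: "B + C < n"
  show "lmul N X Y n i j = 0"
  proof (rule ccontr)
    assume "lmul N X Y n i j \<noteq> 0"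
    then obtain k p where "X p i k \<noteq> 0" "Y (n - p) k j \<noteq> 0" using lmul_nz by blast
    then have "p \<le> B" "n - p \<le> C" using vbD vX vY by blast+
    then show False using n by linarith
  qed
qed

lemma sqN_lmul: "sqN N X \<Longrightarrow> sqN N Y \<Longrightarrow> sqN N (lmul N X Y)"
  unfolding sqN_def
proof (intro allI impI)
  fix n i j assume sX: "\<forall>n i j. X n i j \<noteq> 0 \<longrightarrow> i < N \<and> j < N" and sY: "\<forall>n i j. Y n i j \<noteq> 0 \<longrightarrow> i < N \<and> j < N"
    and "lmul N X Y n i j \<noteq> 0"
  then obtain k p where "X p i k \<noteq> 0" "Y (n - p) k j \<noteq> 0" using lmul_nz by blast
  then show "i < N \<and> j < N" using sX sY by blast
qed

lemma tw_lmul: "tw N X \<Longrightarrow> tw N Y \<Longrightarrow> tw N (lmul N X Y)"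
  unfolding tw_def
proof (intro allI impI)
  fix n i j
  assume tX: "\<forall>n i j. X n i j \<noteq> 0 \<longrightarrow> n mod int N = (int i - int j) mod int N"
    and tY: "\<forall>n i j. Y n i j \<noteq> 0 \<longrightarrow> n mod int N = (int i - int j) mod int N"
    and nz: "lmul N X Y n i j \<noteq> 0"
  obtain k p where "X p i k \<noteq> 0" "Y (n - p) k j \<noteq> 0" using lmul_nz[OF nz] by blast
  then have "p mod int N = (int i - int k) mod int N" "(n - p) mod int N = (int k - int j) mod int N"
    using tX tY by auto
  then have "(p + (n - p)) mod int N = ((int i - int k) + (int k - int j)) mod int N"
    by (metis mod_add_cong)
  then show "n mod int N = (int i - int j) mod int N" by simp
qed

lemma lmul_assoc:
  assumes "vb B X" "vb B Y" "vb B Z"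
  shows "lmul N (lmul N X Y) Z = lmul N X (lmul N Y Z)"
proof (intro ext)
  fix n i j
  define g where "g k k' p q = X p i k' * Y (q - p) k' k * Z (n - q) k j" for k k' p q
  have supp: "p \<in> {n - 2*B..B} \<and> q \<in> {n - B..2*B}" if "g k k' p q \<noteq> 0" for k k' p q
  proof -
    have "X p i k' \<noteq> 0" "Y (q - p) k' k \<noteq> 0" "Z (n - q) k j \<noteq> 0" using that unfolding g_def by auto
    then have "p \<le> B" "q - p \<le> B" "n - q \<le> B" using assms vbD by blast+
    then show ?thesis by auto
  qed
  have fq: "finite {q. Sum_any (\<lambda>p. g k k' p q) \<noteq> 0}" for k k'
  proof (rule fin_win[of _ "n - B" "2*B"])
    fix q assume "Sum_any (\<lambda>p. g k k' p q) \<noteq> 0"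
    then obtain p where "g k k' p q \<noteq> 0" using Sum_any.not_neutral_obtains_not_neutral by blast
    then show "n - B \<le> q \<and> q \<le> 2*B" using supp by auto
  qed
  have fp: "finite {p. Sum_any (\<lambda>q. g k k' p q) \<noteq> 0}" for k k'
  proof (rule fin_win[of _ "n - 2*B" "B"])
    fix p assume "Sum_any (\<lambda>q. g k k' p q) \<noteq> 0"
    then obtain q where "g k k' p q \<noteq> 0" using Sum_any.not_neutral_obtains_not_neutral by blast
    then show "n - 2*B \<le> p \<and> p \<le> B" using supp by auto
  qed
  have sw: "Sum_any (\<lambda>q. Sum_any (\<lambda>p. g k k' p q)) = Sum_any (\<lambda>p. Sum_any (\<lambda>q. g k k' p q))" for k k'
    by (rule SA_swap2[symmetric, of "{n - 2*B..B}" "{n - B..2*B}"]) (auto dest: supp)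
  have "lmul N (lmul N X Y) Z n i j = (\<Sum>k<N. Sum_any (\<lambda>q. \<Sum>k'<N. Sum_any (\<lambda>p. g k k' p q)))"
    by (simp add: lmul_SA sum_distrib_right SA_mult_right g_def)
  also have "\<dots> = (\<Sum>k<N. \<Sum>k'<N. Sum_any (\<lambda>q. Sum_any (\<lambda>p. g k k' p q)))"
    by (rule sum.cong[OF refl], rule SA_sum_swap) (auto simp: fq)
  also have "\<dots> = (\<Sum>k<N. \<Sum>k'<N. Sum_any (\<lambda>p. Sum_any (\<lambda>q. g k k' p q)))"
    by (simp add: sw)
  also have "\<dots> = (\<Sum>k'<N. \<Sum>k<N. Sum_any (\<lambda>p. Sum_any (\<lambda>q. g k k' p q)))"
    by (rule sum.swap)
  also have "\<dots> = (\<Sum>k'<N. Sum_any (\<lambda>p. \<Sum>k<N. Sum_any (\<lambda>q. g k k' p q)))"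
    by (rule sum.cong[OF refl], rule SA_sum_swap[symmetric]) (auto simp: fp)
  also have "\<dots> = lmul N X (lmul N Y Z) n i j"
  proof -
    have e: "Sum_any (\<lambda>q. g k k' p q) = Sum_any (\<lambda>r. X p i k' * Y r k' k * Z (n - p - r) k j)" for k k' p
      unfolding g_def by (subst SA_shift[where c="-p"]) (simp add: algebra_simps)
    have "lmul N X (lmul N Y Z) n i j = (\<Sum>k'<N. Sum_any (\<lambda>p. X p i k' * (\<Sum>k<N. Sum_any (\<lambda>r. Y r k' k * Z (n - p - r) k j))))"
      by (simp add: lmul_SA)
    also have "\<dots> = (\<Sum>k'<N. Sum_any (\<lambda>p. \<Sum>k<N. Sum_any (\<lambda>r. X p i k' * Y r k' k * Z (n - p - r) k j)))"
      by (simp only: sum_distrib_left SA_mult_left mult.assoc)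
    finally show ?thesis by (simp only: e)
  qed
  finally show "lmul N (lmul N X Y) Z n i j = lmul N X (lmul N Y Z) n i j" .
qed


lemma fin_prod:
  assumes vX: "vb B X" and vY: "vb C Y"
  shows "finite {p. X p i k * Y (n - p) k j \<noteq> 0}"
proof (rule fin_win[of _ "n - C" B])
  fix p assume "X p i k * Y (n - p) k j \<noteq> 0"
  then have "X p i k \<noteq> 0" "Y (n - p) k j \<noteq> 0" by auto
  then have "p \<le> B" "n - p \<le> C" using vbD vX vY by blast+
  then show "n - C \<le> p \<and> p \<le> B" by linarith
qed

lemma fin_pair: "vb B X \<Longrightarrow> vb C Y \<Longrightarrow> finite {p. X p i k * Y (- p) k j \<noteq> 0}"
  using fin_prod[of B X C Y i k 0 j] by simp

lemma lmul_zero_left[simp]: "lmul N (\<lambda>n i j. 0) Y = (\<lambda>n i j. 0)"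
  by (simp add: lmul_def)
lemma lmul_zero_right[simp]: "lmul N X (\<lambda>n i j. 0) = (\<lambda>n i j. 0)"
  by (simp add: lmul_def)
lemma lpair_zero_left[simp]: "lpair N (\<lambda>n i j. 0) Y = 0"
  by (simp add: lpair_def)
lemma lpair_zero_right[simp]: "lpair N X (\<lambda>n i j. 0) = 0"
  by (simp add: lpair_def)

lemma lmul_smul_left: "lmul N (\<lambda>n i j. c * X n i j) Y = (\<lambda>n i j. c * lmul N X Y n i j)"
  by (intro ext) (simp add: lmul_SA sum_distrib_left SA_mult_left mult.assoc)
lemma lmul_smul_right: "lmul N X (\<lambda>n i j. c * Y n i j) = (\<lambda>n i j. c * lmul N X Y n i j)"
  by (intro ext) (simp add: lmul_SA sum_distrib_left SA_mult_left mult.left_commute)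

lemma lmul_neg_left: "lmul N (\<lambda>n i j. - X n i j) Y = (\<lambda>n i j. - lmul N X Y n i j)"
  using lmul_smul_left[of N "-1" X Y] by simp
lemma lmul_neg_right: "lmul N X (\<lambda>n i j. - Y n i j) = (\<lambda>n i j. - lmul N X Y n i j)"
  using lmul_smul_right[of N X "-1" Y] by simp

lemma lmul_add_left:
  assumes "vb B X" "vb B Y" "vb C Z"
  shows "lmul N (\<lambda>n i j. X n i j + Y n i j) Z = (\<lambda>n i j. lmul N X Z n i j + lmul N Y Z n i j)"
proof (intro ext)
  fix n i j
  show "lmul N (\<lambda>n i j. X n i j + Y n i j) Z n i j = lmul N X Z n i j + lmul N Y Z n i j"
    unfolding lmul_SA sum.distrib[symmetric]
  proof (rule sum.cong[OF refl])
    fix k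
    have "Sum_any (\<lambda>p. (X p i k + Y p i k) * Z (n - p) k j) = Sum_any (\<lambda>p. X p i k * Z (n - p) k j + Y p i k * Z (n - p) k j)"
      by (simp add: distrib_right)
    also have "\<dots> = Sum_any (\<lambda>p. X p i k * Z (n - p) k j) + Sum_any (\<lambda>p. Y p i k * Z (n - p) k j)"
      by (rule SA_add[OF fin_prod[OF assms(1,3)] fin_prod[OF assms(2,3)]])
    finally show "Sum_any (\<lambda>p. (X p i k + Y p i k) * Z (n - p) k j) = Sum_any (\<lambda>p. X p i k * Z (n - p) k j) + Sum_any (\<lambda>p. Y p i k * Z (n - p) k j)" .
  qed
qed

lemma lmul_add_right:
  assumes "vb B X" "vb C Y" "vb C Z"
  shows "lmul N X (\<lambda>n i j. Y n i j + Z n i j) = (\<lambda>n i j. lmul N X Y n i j + lmul N X Z n i j)"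
proof (intro ext)
  fix n i j
  show "lmul N X (\<lambda>n i j. Y n i j + Z n i j) n i j = lmul N X Y n i j + lmul N X Z n i j"
    unfolding lmul_SA sum.distrib[symmetric]
  proof (rule sum.cong[OF refl])
    fix k
    have "Sum_any (\<lambda>p. X p i k * (Y (n - p) k j + Z (n - p) k j)) = Sum_any (\<lambda>p. X p i k * Y (n - p) k j + X p i k * Z (n - p) k j)"
      by (simp add: distrib_left)
    also have "\<dots> = Sum_any (\<lambda>p. X p i k * Y (n - p) k j) + Sum_any (\<lambda>p. X p i k * Z (n - p) k j)"
      by (rule SA_add[OF fin_prod[OF assms(1,2)] fin_prod[OF assms(1,3)]])
    finally show "Sum_any (\<lambda>p. X p i k * (Y (n - p) k j + Z (n - p) k j)) = Sum_any (\<lambda>p. X p i k * Y (n - p) k j) + Sum_any (\<lambda>p. X p i k * Z (n - p) k j)" .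
  qed
qed

lemma vb_neg: "vb B X \<Longrightarrow> vb B (\<lambda>n i j. c * X n i j)"
  unfolding vb_def by simp

lemma vb_add: "vb B X \<Longrightarrow> vb B Y \<Longrightarrow> vb B (\<lambda>n i j. X n i j + Y n i j)"
  unfolding vb_def by simp

lemma lmul_sub_left:
  assumes "vb B X" "vb B Y" "vb C Z"
  shows "lmul N (\<lambda>n i j. X n i j - Y n i j) Z = (\<lambda>n i j. lmul N X Z n i j - lmul N Y Z n i j)"
proof -
  have "lmul N (\<lambda>n i j. X n i j - Y n i j) Z = lmul N (\<lambda>n i j. X n i j + (-1) * Y n i j) Z" by simp
  also have "\<dots> = (\<lambda>n i j. lmul N X Z n i j + lmul N (\<lambda>n i j. (-1) * Y n i j) Z n i j)"
    by (rule lmul_add_left[OF assms(1) vb_neg[OF assms(2)] assms(3)])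
  finally show ?thesis by (simp add: lmul_neg_left)
qed

lemma lmul_sub_right:
  assumes "vb B X" "vb C Y" "vb C Z"
  shows "lmul N X (\<lambda>n i j. Y n i j - Z n i j) = (\<lambda>n i j. lmul N X Y n i j - lmul N X Z n i j)"
proof -
  have "lmul N X (\<lambda>n i j. Y n i j - Z n i j) = lmul N X (\<lambda>n i j. Y n i j + (-1) * Z n i j)" by simp
  also have "\<dots> = (\<lambda>n i j. lmul N X Y n i j + lmul N X (\<lambda>n i j. (-1) * Z n i j) n i j)"
    by (rule lmul_add_right[OF assms(1,2) vb_neg[OF assms(3)]])
  finally show ?thesis by (simp add: lmul_neg_right)
qed

lemma lone_left: "sqN N X \<Longrightarrow> lmul N (lone N) X = X"
proof (intro ext)
  fix n i j assume sq: "sqN N X"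
  have "lmul N (lone N) X n i j = (\<Sum>k<N. lone N 0 i k * X n k j)"
    unfolding lmul_SA by (rule sum.cong[OF refl], subst SA_delta'[of 0]) (auto simp: lone_def)
  also have "\<dots> = (\<Sum>k<N. if k = i then (if i < N then X n i j else 0) else 0)"
    by (rule sum.cong[OF refl]) (auto simp: lone_def)
  also have "\<dots> = X n i j" using sq unfolding sqN_def by (auto simp: sum.delta')
  finally show "lmul N (lone N) X n i j = X n i j" .
qed

lemma lone_right: "sqN N X \<Longrightarrow> lmul N X (lone N) = X"
proof (intro ext)
  fix n i j assume sq: "sqN N X"
  have "lmul N X (lone N) n i j = (\<Sum>k<N. X n i k * lone N 0 k j)"
    unfolding lmul_SA by (rule sum.cong[OF refl], subst SA_delta'[of n]) (auto simp: lone_def)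
  also have "\<dots> = (\<Sum>k<N. if k = j then (if j < N then X n i j else 0) else 0)"
    by (rule sum.cong[OF refl]) (auto simp: lone_def)
  also have "\<dots> = X n i j" using sq unfolding sqN_def by (auto simp: sum.delta')
  finally show "lmul N X (lone N) n i j = X n i j" .
qed

lemma lpair_tr: "lpair N X Z = (\<Sum>i<N. lmul N X Z 0 i i)"
  by (simp add: lpair_SA lmul_SA)

lemma lpair_sym: "lpair N X Z = lpair N Z X"
proof -
  have r: "Sum_any (\<lambda>p. X p i j * Z (- p) j i) = Sum_any (\<lambda>p. Z p j i * X (- p) i j)" for i j
  proof (rule Sum_any.reindex_cong[of uminus])
    show "bij (uminus :: int \<Rightarrow> int)" by (rule bij_betw_byWitness[of _ uminus]) auto
  qed (auto simp: mult.commute)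
  show ?thesis unfolding lpair_SA
    by (subst sum.swap) (simp add: r)
qed

lemma lpair_assoc:
  assumes "vb B X" "vb B Y" "vb B Z"
  shows "lpair N (lmul N X Y) Z = lpair N X (lmul N Y Z)"
  by (simp add: lpair_tr lmul_assoc[OF assms])

lemma lpair_cyc:
  assumes "vb B X" "vb B Y" "vb B Z"
  shows "lpair N (lmul N X Y) Z = lpair N Y (lmul N Z X)"
  by (metis assms lpair_assoc lpair_sym)

lemma lpair_add_left:
  assumes "vb B X" "vb B Y" "vb C Z"
  shows "lpair N (\<lambda>n i j. X n i j + Y n i j) Z = lpair N X Z + lpair N Y Z"
  unfolding lpair_SA sum.distrib[symmetric]
proof (intro sum.cong refl)
  fix i j
  have "Sum_any (\<lambda>p. (X p i j + Y p i j) * Z (- p) j i) = Sum_any (\<lambda>p. X p i j * Z (- p) j i + Y p i j * Z (- p) j i)"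
    by (simp add: distrib_right)
  also have "\<dots> = Sum_any (\<lambda>p. X p i j * Z (- p) j i) + Sum_any (\<lambda>p. Y p i j * Z (- p) j i)"
    by (rule SA_add[OF fin_pair[OF assms(1,3)] fin_pair[OF assms(2,3)]])
  finally show "Sum_any (\<lambda>p. (X p i j + Y p i j) * Z (- p) j i) = Sum_any (\<lambda>p. X p i j * Z (- p) j i) + Sum_any (\<lambda>p. Y p i j * Z (- p) j i)" .
qed

lemma lpair_smul_left: "lpair N (\<lambda>n i j. c * X n i j) Z = c * lpair N X Z"
  by (simp add: lpair_SA sum_distrib_left SA_mult_left mult.assoc)

lemma lpair_sub_left:
  assumes "vb B X" "vb B Y" "vb C Z"
  shows "lpair N (\<lambda>n i j. X n i j - Y n i j) Z = lpair N X Z - lpair N Y Z"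
proof -
  have "lpair N (\<lambda>n i j. X n i j - Y n i j) Z = lpair N (\<lambda>n i j. X n i j + (-1) * Y n i j) Z" by simp
  also have "\<dots> = lpair N X Z + lpair N (\<lambda>n i j. (-1) * Y n i j) Z"
    by (rule lpair_add_left[OF assms(1) vb_neg[OF assms(2)] assms(3)])
  finally show ?thesis using lpair_smul_left[of N "-1" Y Z] by simp
qed

lemma lpair_add_right:
  assumes "vb B X" "vb B Y" "vb C Z"
  shows "lpair N Z (\<lambda>n i j. X n i j + Y n i j) = lpair N Z X + lpair N Z Y"
  using lpair_add_left[OF assms] by (simp add: lpair_sym)
lemma lpair_sub_right:
  assumes "vb B X" "vb B Y" "vb C Z"
  shows "lpair N Z (\<lambda>n i j. X n i j - Y n i j) = lpair N Z X - lpair N Z Y"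
  using lpair_sub_left[OF assms] by (simp add: lpair_sym)
lemma lpair_smul_right: "lpair N Z (\<lambda>n i j. c * X n i j) = c * lpair N Z X"
  using lpair_smul_left by (metis lpair_sym)

lemma lpair_deg:
  assumes "vb B X" "vb C Z" "B + C < 0"
  shows "lpair N X Z = 0"
proof -
  have "X p i j * Z (- p) j i = 0" for p i j
  proof (rule ccontr)
    assume "X p i j * Z (- p) j i \<noteq> 0"
    then have "X p i j \<noteq> 0" "Z (- p) j i \<noteq> 0" by auto
    then have "p \<le> B" "- p \<le> C" using vbD assms(1,2) by blast+
    then show False using assms(3) by linarith
  qed
  then have "Sum_any (\<lambda>p. X p i j * Z (- p) j i) = 0" for i j
    by (subst SA_win[of "{}"]) auto
  then show ?thesis unfolding lpair_SA by simp
qed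

lemma vb_lone: "vb 0 (lone N)"
  unfolding vb_def lone_def by simp
lemma sqN_lone: "sqN N (lone N)"
  unfolding sqN_def lone_def by simp
lemma tw_lone: "tw N (lone N)"
  unfolding tw_def lone_def by simp


function RI :: "nat \<Rightarrow> lmat \<Rightarrow> int \<Rightarrow> nat \<Rightarrow> nat \<Rightarrow> real" where
  "RI N A n a b = (if a < N \<and> b < N \<and> n \<le> 0 then
     (if n = 0 then (if a = b then 1 / A 0 a a else 0)
      else - (1 / A 0 a a) * (\<Sum>p\<in>{n..-1}. \<Sum>c<N. A p a c * RI N A (n - p) c b))
    else 0)"
  by pat_completeness auto
termination by (relation "measure (\<lambda>(N,A,n,a,b). nat (- n))") auto

function LI :: "nat \<Rightarrow> lmat \<Rightarrow> int \<Rightarrow> nat \<Rightarrow> nat \<Rightarrow> real" where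
  "LI N A n a b = (if a < N \<and> b < N \<and> n \<le> 0 then
     (if n = 0 then (if a = b then 1 / A 0 b b else 0)
      else - (\<Sum>p\<in>{n..-1}. \<Sum>c<N. LI N A (n - p) a c * A p c b) * (1 / A 0 b b))
    else 0)"
  by pat_completeness auto
termination by (relation "measure (\<lambda>(N,A,n,a,b). nat (- n))") auto

declare RI.simps[simp del] LI.simps[simp del]

definition good :: "nat \<Rightarrow> lmat \<Rightarrow> bool" where
  "good N A \<longleftrightarrow> vb 0 A \<and> sqN N A \<and> tw N A \<and> (\<forall>a<N. A 0 a a \<noteq> 0)"

lemma tw_diag: "tw N X \<Longrightarrow> sqN N X \<Longrightarrow> X 0 a c \<noteq> 0 \<Longrightarrow> a = c"
proof -
  assume t: "tw N X" and s: "sqN N X" and nz: "X 0 a c \<noteq> 0"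
  then have "a < N" "c < N" unfolding sqN_def by auto
  moreover have "0 mod int N = (int a - int c) mod int N" using t nz unfolding tw_def by blast
  ultimately have "int N dvd (int a - int c)" by (simp add: dvd_eq_mod_eq_0)
  show "a = c"
  proof (rule ccontr)
    assume "a \<noteq> c"
    then have "\<bar>int N\<bar> \<le> \<bar>int a - int c\<bar>" using dvd_imp_le_int[of "int a - int c" "int N"] \<open>int N dvd (int a - int c)\<close> by simp
    then show False using \<open>a < N\<close> \<open>c < N\<close> by arith
  qed
qed

lemma lmul_SA': "lmul N X Y n i j = (\<Sum>k<N. Sum_any (\<lambda>q. X (n - q) i k * Y q k j))"
  unfolding lmul_SA
proof (rule sum.cong[OF refl], rule Sum_any.reindex_cong[of "\<lambda>q. n - q"])
  show "bij (\<lambda>q::int. n - q)" by (rule bij_betw_byWitness[of _ "\<lambda>q. n - q"]) auto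
qed auto

lemma win0':
  assumes "vb 0 X" "vb 0 Y" "p \<notin> {n..0}"
  shows "Y (n - p) a c * X p c b = 0"
proof (cases "p > 0")
  case True then show ?thesis using assms(1) unfolding vb_def by simp
next
  case False then have "n - p > 0" using assms(3) by auto
  then show ?thesis using assms(2) unfolding vb_def by simp
qed

lemma win0:
  assumes "vb 0 X" "vb 0 Y" "p \<notin> {n..0}"
  shows "X p i k * Y (n - p) k j = 0"
proof (cases "p > 0")
  case True then show ?thesis using assms(1) unfolding vb_def by simp
next
  case False then have "n - p > 0" using assms(3) by auto
  then show ?thesis using assms(2) unfolding vb_def by simp
qed

lemma vb_RI: "vb 0 (RI N A)" unfolding vb_def by (subst RI.simps) simp
lemma vb_LI: "vb 0 (LI N A)" unfolding vb_def by (subst LI.simps) simp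
lemma sqN_RI: "sqN N (RI N A)" unfolding sqN_def by (subst RI.simps) (simp split: if_splits)
lemma sqN_LI: "sqN N (LI N A)" unfolding sqN_def by (subst LI.simps) (simp split: if_splits)

lemma RI_right:
  assumes g: "good N A"
  shows "lmul N A (RI N A) = lone N"
proof (intro ext)
  fix n a b
  have vA: "vb 0 A" and sA: "sqN N A" and tA: "tw N A" and dA: "\<And>a. a < N \<Longrightarrow> A 0 a a \<noteq> 0"
    using g unfolding good_def by auto
  show "lmul N A (RI N A) n a b = lone N n a b"
  proof (cases "n \<le> 0 \<and> a < N \<and> b < N")
    case False
    then consider "n > 0" | "a \<ge> N" | "b \<ge> N" by linarith
    then show ?thesis
    proof cases
      case 1 then show ?thesis using vbD[OF vb_lmul[OF vA vb_RI]] by (force simp: lone_def)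
    next
      case 2 then show ?thesis using sqN_lmul[OF sA sqN_RI] unfolding sqN_def lone_def by force
    next
      case 3 then show ?thesis using sqN_lmul[OF sA sqN_RI] unfolding sqN_def lone_def by force
    qed
  next
    case True
    then have n0: "n \<le> 0" and aN: "a < N" and bN: "b < N" by auto
    have w: "Sum_any (\<lambda>p. A p a c * RI N A (n - p) c b) = (\<Sum>p\<in>{n..0}. A p a c * RI N A (n - p) c b)" for c
      by (rule SA_win) (simp, rule win0[OF vA vb_RI])
    have "lmul N A (RI N A) n a b = (\<Sum>c<N. \<Sum>p\<in>{n..0}. A p a c * RI N A (n - p) c b)"
      unfolding lmul_SA w ..
    also have "\<dots> = (\<Sum>c<N. A 0 a c * RI N A n c b + (\<Sum>p\<in>{n..-1}. A p a c * RI N A (n - p) c b))"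
    proof (rule sum.cong[OF refl])
      fix c
      have "{n..0} = insert 0 {n..-1}" using n0 by auto
      then show "(\<Sum>p\<in>{n..0}. A p a c * RI N A (n - p) c b) = A 0 a c * RI N A n c b + (\<Sum>p\<in>{n..-1}. A p a c * RI N A (n - p) c b)"
        by simp
    qed
    also have "\<dots> = A 0 a a * RI N A n a b + (\<Sum>p\<in>{n..-1}. \<Sum>c<N. A p a c * RI N A (n - p) c b)"
    proof -
      have "(\<Sum>c<N. A 0 a c * RI N A n c b) = A 0 a a * RI N A n a b"
      proof -
        have "(\<Sum>c<N. A 0 a c * RI N A n c b) = (\<Sum>c<N. if a = c then A 0 a c * RI N A n c b else 0)"
          by (rule sum.cong[OF refl]) (use tw_diag[OF tA sA, of a] in auto)
        also have "\<dots> = A 0 a a * RI N A n a b" using aN by (subst sum.delta') auto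
        finally show ?thesis .
      qed
      then show ?thesis by (simp add: sum.distrib sum.swap[of _ "{..<N}"])
    qed
    also have "\<dots> = lone N n a b"
    proof (cases "n = 0")
      case True then show ?thesis using aN bN dA[OF aN] by (subst RI.simps) (auto simp: lone_def)
    next
      case False then show ?thesis using aN bN n0 dA[OF aN] by (subst RI.simps) (simp add: lone_def)
    qed
    finally show ?thesis .
  qed
qed

lemma LI_left:
  assumes g: "good N A"
  shows "lmul N (LI N A) A = lone N"
proof (intro ext)
  fix n a b
  have vA: "vb 0 A" and sA: "sqN N A" and tA: "tw N A" and dA: "\<And>a. a < N \<Longrightarrow> A 0 a a \<noteq> 0"
    using g unfolding good_def by auto
  show "lmul N (LI N A) A n a b = lone N n a b"
  proof (cases "n \<le> 0 \<and> a < N \<and> b < N")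
    case False
    then consider "n > 0" | "a \<ge> N" | "b \<ge> N" by linarith
    then show ?thesis
    proof cases
      case 1 then show ?thesis using vbD[OF vb_lmul[OF vb_LI vA]] by (force simp: lone_def)
    next
      case 2 then show ?thesis using sqN_lmul[OF sqN_LI sA] unfolding sqN_def lone_def by force
    next
      case 3 then show ?thesis using sqN_lmul[OF sqN_LI sA] unfolding sqN_def lone_def by force
    qed
  next
    case True
    then have n0: "n \<le> 0" and aN: "a < N" and bN: "b < N" by auto
    have w: "Sum_any (\<lambda>q. LI N A (n - q) a c * A q c b) = (\<Sum>q\<in>{n..0}. LI N A (n - q) a c * A q c b)" for c
      by (rule SA_win) (simp, rule win0'[OF vA vb_LI])
    have "lmul N (LI N A) A n a b = (\<Sum>c<N. \<Sum>q\<in>{n..0}. LI N A (n - q) a c * A q c b)"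
      unfolding lmul_SA' w ..
    also have "\<dots> = (\<Sum>c<N. LI N A n a c * A 0 c b + (\<Sum>q\<in>{n..-1}. LI N A (n - q) a c * A q c b))"
    proof (rule sum.cong[OF refl])
      fix c
      have "{n..0} = insert 0 {n..-1}" using n0 by auto
      then show "(\<Sum>q\<in>{n..0}. LI N A (n - q) a c * A q c b) = LI N A n a c * A 0 c b + (\<Sum>q\<in>{n..-1}. LI N A (n - q) a c * A q c b)"
        by simp
    qed
    also have "\<dots> = LI N A n a b * A 0 b b + (\<Sum>q\<in>{n..-1}. \<Sum>c<N. LI N A (n - q) a c * A q c b)"
    proof -
      have "(\<Sum>c<N. LI N A n a c * A 0 c b) = LI N A n a b * A 0 b b"
      proof -
        have "(\<Sum>c<N. LI N A n a c * A 0 c b) = (\<Sum>c<N. if c = b then LI N A n a c * A 0 c b else 0)"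
          by (rule sum.cong[OF refl]) (use tw_diag[OF tA sA, of _ b] in auto)
        also have "\<dots> = LI N A n a b * A 0 b b" using bN by (subst sum.delta) auto
        finally show ?thesis .
      qed
      then show ?thesis using bN by (simp add: sum.distrib sum.swap[of _ "{..<N}"])
    qed
    also have "\<dots> = lone N n a b"
    proof (cases "n = 0")
      case True then show ?thesis using aN bN dA[OF bN] by (subst LI.simps) (auto simp: lone_def)
    next
      case False then show ?thesis using aN bN n0 dA[OF bN] by (subst LI.simps) (simp add: lone_def)
    qed
    finally show ?thesis .
  qed
qed

lemma LI_eq_RI: "good N A \<Longrightarrow> LI N A = RI N A"
proof -
  assume g: "good N A"
  then have vA: "vb 0 A" and sA: "sqN N A" unfolding good_def by auto
  have "LI N A = lmul N (LI N A) (lmul N A (RI N A))" using RI_right[OF g] lone_right[OF sqN_LI] by simp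
  also have "\<dots> = lmul N (lmul N (LI N A) A) (RI N A)" using lmul_assoc[OF vb_LI vA vb_RI] by simp
  also have "\<dots> = RI N A" using LI_left[OF g] lone_left[OF sqN_RI] by simp
  finally show ?thesis .
qed

lemma RI_left: "good N A \<Longrightarrow> lmul N (RI N A) A = lone N"
  using LI_left LI_eq_RI by metis

lemma tw_RI: "tw N A \<Longrightarrow> tw N (RI N A)"
proof -
  assume tA: "tw N A"
  have "\<forall>n a b. nat (- n) = K \<longrightarrow> RI N A n a b \<noteq> 0 \<longrightarrow> n mod int N = (int a - int b) mod int N" for K
  proof (induction K rule: less_induct)
    case (less K)
    show ?case
    proof (intro allI impI)
      fix n a b assume K: "nat (- n) = K" and nz: "RI N A n a b \<noteq> 0"
      from nz have n0: "n \<le> 0" and aN: "a < N" and bN: "b < N" by (subst (asm) RI.simps, simp split: if_splits)+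
      show "n mod int N = (int a - int b) mod int N"
      proof (cases "n = 0")
        case True
        then show ?thesis using nz by (subst (asm) RI.simps) (simp split: if_splits)
      next
        case False
        then have "(\<Sum>p\<in>{n..-1}. \<Sum>c<N. A p a c * RI N A (n - p) c b) \<noteq> 0"
          using nz by (subst (asm) RI.simps) (auto split: if_splits)
        then obtain p where p: "p \<in> {n..-1}" and "(\<Sum>c<N. A p a c * RI N A (n - p) c b) \<noteq> 0"
          using sum.not_neutral_contains_not_neutral by blast
        then obtain c where "A p a c * RI N A (n - p) c b \<noteq> 0"
          using sum.not_neutral_contains_not_neutral by blast
        then have A1: "A p a c \<noteq> 0" and R1: "RI N A (n - p) c b \<noteq> 0" by auto
        have "nat (- (n - p)) < K" using p K by auto
        then have "(n - p) mod int N = (int c - int b) mod int N"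
          using less R1 by blast
        moreover have "p mod int N = (int a - int c) mod int N" using A1 tA unfolding tw_def by blast
        ultimately have "(p + (n - p)) mod int N = ((int a - int c) + (int c - int b)) mod int N"
          by (metis mod_add_cong)
        then show ?thesis by simp
      qed
    qed
  qed
  then show ?thesis unfolding tw_def by blast
qed

lemma in_g_RI: "tw N A \<Longrightarrow> in_g N (RI N A)"
  unfolding in_g_iff using sqN_RI tw_RI vb_RI by blast

lemma inv_unique:
  assumes "in_g N Z" "lmul N Z A = lone N" "vb 0 A" "sqN N R" "vb 0 R" "lmul N A R = lone N"
  shows "Z = R"
proof -
  obtain B where vZ: "vb B Z" and sZ: "sqN N Z" using assms(1) unfolding in_g_iff by blast
  let ?C = "max B 0"
  have v1: "vb ?C Z" "vb ?C A" "vb ?C R" using vZ assms(3,5) vb_mono by (metis max.cobounded1 max.cobounded2)+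
  have "Z = lmul N Z (lmul N A R)" using assms(6) lone_right[OF sZ] by simp
  also have "\<dots> = lmul N (lmul N Z A) R" using lmul_assoc[OF v1] by simp
  also have "\<dots> = R" using assms(2) lone_left[OF assms(4)] by simp
  finally show ?thesis .
qed

lemma linv_good: "good N A \<Longrightarrow> linv N A = RI N A"
proof -
  assume g: "good N A"
  then have vA: "vb 0 A" and tA: "tw N A" unfolding good_def by auto
  show ?thesis unfolding linv_def
  proof (rule the_equality)
    show "in_g N (RI N A) \<and> lmul N (RI N A) A = lone N \<and> lmul N A (RI N A) = lone N"
      using in_g_RI[OF tA] RI_left[OF g] RI_right[OF g] by blast
  next
    fix Z assume "in_g N Z \<and> lmul N Z A = lone N \<and> lmul N A Z = lone N"
    then show "Z = RI N A" using inv_unique[OF _ _ vA sqN_RI vb_RI RI_right[OF g]] by blast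
  qed
qed


lemma lmul_win0: "vb 0 X \<Longrightarrow> vb 0 Y \<Longrightarrow> lmul N X Y n i j = (\<Sum>k<N. \<Sum>p\<in>{n..0}. X p i k * Y (n - p) k j)"
  unfolding lmul_SA
  by (rule sum.cong[OF refl], rule SA_win) (use vbD in \<open>fastforce+\<close>)

lemma twU_aux:
  assumes "j = (i + nat (- n)) mod N" "n \<le> -1"
  shows "n mod int N = (int i - int j) mod int N"
proof -
  have "int j = (int i - n) mod int N" using assms by (simp add: zmod_int)
  then have "(int i - int j) mod int N = (int i - (int i - n)) mod int N"
    by (metis mod_diff_right_eq)
  then show ?thesis by simp
qed

lemma good_U: "good N (Umat N m \<alpha> c)"
  unfolding good_def vb_def sqN_def tw_def
proof (intro conjI allI impI)
  fix n i j assume "Umat N m \<alpha> c n i j \<noteq> 0"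
  then show "n mod int N = (int i - int j) mod int N"
    by (auto simp: Umat_def lone_def twU_aux split: if_splits)
qed (auto simp: Umat_def lone_def split: if_splits)

lemma vb_U: "vb 0 (Umat N m \<alpha> c)" and sqN_U: "sqN N (Umat N m \<alpha> c)" and tw_U: "tw N (Umat N m \<alpha> c)"
  using good_U unfolding good_def by auto

definition Ym where "Ym N m \<alpha> c = RI N (Umat N m \<alpha> c)"

lemma Y_linv: "linv N (Umat N m \<alpha> c) = Ym N m \<alpha> c"
  unfolding Ym_def by (rule linv_good[OF good_U])

lemma vb_Y: "vb 0 (Ym N m \<alpha> c)" and sqN_Y: "sqN N (Ym N m \<alpha> c)" and tw_Y: "tw N (Ym N m \<alpha> c)"
  unfolding Ym_def using vb_RI sqN_RI tw_RI tw_U by auto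

lemma UY: "lmul N (Umat N m \<alpha> c) (Ym N m \<alpha> c) = lone N"
  unfolding Ym_def by (rule RI_right[OF good_U])
lemma YU: "lmul N (Ym N m \<alpha> c) (Umat N m \<alpha> c) = lone N"
  unfolding Ym_def by (rule RI_left[OF good_U])

lemma Y0: "a < N \<Longrightarrow> Ym N m \<alpha> c 0 a b = (if a = b \<and> b < N then 1 else 0)"
  unfolding Ym_def by (subst RI.simps) (simp add: Umat_def lone_def)

lemma good_Y: "good N (Ym N m \<alpha> c)"
  unfolding good_def using vb_Y sqN_Y tw_Y Y0 by auto

lemma RI_Y: "RI N (Ym N m \<alpha> c) = Umat N m \<alpha> c"
  by (rule inv_unique[OF in_g_RI[OF tw_Y] RI_left[OF good_Y] vb_Y sqN_U vb_U YU])

lemma linv_Y: "linv N (Ym N m \<alpha> c) = Umat N m \<alpha> c"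
  using linv_good[OF good_Y] RI_Y by simp

lemma ltrunc_vb0: "vb 0 X \<Longrightarrow> ltrunc X = X"
  unfolding ltrunc_def vb_def by (intro ext) auto


lemma RI_cont:
  assumes c: "\<And>n a b. isCont (\<lambda>t. At t n a b) 0" and d: "\<And>a. a < N \<Longrightarrow> At 0 0 a a \<noteq> 0"
  shows "isCont (\<lambda>t. RI N (At t) n a b) 0"
proof -
  have "\<forall>n a b. nat (- n) = K \<longrightarrow> isCont (\<lambda>t. RI N (At t) n a b) 0" for K
  proof (induction K rule: less_induct)
    case (less K)
    show ?case
    proof (intro allI impI)
      fix n a b assume K: "nat (- n) = K"
      have e: "(\<lambda>t. RI N (At t) n a b) = (\<lambda>t. if a < N \<and> b < N \<and> n \<le> 0 then
         (if n = 0 then (if a = b then 1 / At t 0 a a else 0)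
          else - (1 / At t 0 a a) * (\<Sum>p\<in>{n..-1}. \<Sum>c<N. At t p a c * RI N (At t) (n - p) c b))
        else 0)"
        by (intro ext) (subst RI.simps, rule refl)
      show "isCont (\<lambda>t. RI N (At t) n a b) 0"
      proof (cases "a < N \<and> b < N \<and> n \<le> 0")
        case True
        have ih: "isCont (\<lambda>t. RI N (At t) (n - p) c b) 0" if "p \<in> {n..-1}" for p c
          using less[rule_format, of "nat (- (n - p))" "n - p" c b] that K by auto
        have inv: "isCont (\<lambda>t. 1 / At t 0 a a) 0"
          using True d[of a] c[of 0 a a] by (intro continuous_intros) auto
        show ?thesis
        proof (cases "n = 0")
          case n0: True
          show ?thesis
          proof (cases "a = b")
            case True
            have "(\<lambda>t. RI N (At t) n a b) = (\<lambda>t. 1 / At t 0 a a)" unfolding e using n0 True \<open>a < N \<and> b < N \<and> n \<le> 0\<close> by simp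
            then show ?thesis using inv by simp
          next
            case False
            have "(\<lambda>t. RI N (At t) n a b) = (\<lambda>t. 0)" unfolding e using n0 False True by simp
            then show ?thesis by simp
          qed
        next
          case False
          have "(\<lambda>t. RI N (At t) n a b) = (\<lambda>t. - (1 / At t 0 a a) * (\<Sum>p\<in>{n..-1}. \<Sum>c<N. At t p a c * RI N (At t) (n - p) c b))"
            unfolding e using False True by simp
          moreover have "isCont (\<lambda>t. - (1 / At t 0 a a) * (\<Sum>p\<in>{n..-1}. \<Sum>c<N. At t p a c * RI N (At t) (n - p) c b)) 0"
            using inv ih c d[of a] True by (intro continuous_intros) auto
          ultimately show ?thesis by simp
        qed
      next
        case False
        then have "(\<lambda>t. RI N (At t) n a b) = (\<lambda>t. 0)" unfolding e by auto
        then show ?thesis by simp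
      qed
    qed
  qed
  then show ?thesis by blast
qed

definition Fm :: "nat \<Rightarrow> nat \<Rightarrow> nat \<Rightarrow> lmat" where
  "Fm N j k = (\<lambda>n a b. if n = int j \<and> a = (k + j) mod N \<and> b = k then 1 else 0)"

definition G2C :: "nat \<Rightarrow> nat \<Rightarrow> real \<Rightarrow> (nat \<Rightarrow> nat \<Rightarrow> real) \<Rightarrow> nat \<Rightarrow> nat \<Rightarrow> lmat" where
  "G2C N m \<alpha> c j k = (\<lambda>n a b. if 0 \<le> n then lmul N (lmul N (Umat N m \<alpha> c) (Fm N j k)) (Umat N m \<alpha> c) n a b / \<alpha> else 0)"

lemma vb_Fm: "vb (int j) (Fm N j k)" unfolding vb_def Fm_def by auto

lemma sum2_delta:
  fixes N i0 j0 :: nat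
  assumes "i0 < N" "j0 < N"
  shows "(\<Sum>a<N. \<Sum>b<N. if a = i0 \<and> b = j0 then f a b else (0::real)) = f i0 j0"
proof -
  have "(\<Sum>b<N. if a = i0 \<and> b = j0 then f a b else 0) = (if a = i0 then f a j0 else 0)" for a
  proof -
    have "(\<Sum>b<N. if a = i0 \<and> b = j0 then f a b else 0) = (\<Sum>b<N. if b = j0 then (if a = i0 then f a b else 0) else 0)"
      by (rule sum.cong) auto
    also have "\<dots> = (if a = i0 then f a j0 else 0)" using assms(2) by (subst sum.delta) auto
    finally show ?thesis .
  qed
  then show ?thesis using assms(1) by (simp add: sum.delta')
qed

lemma lpair_Fm: "k < N \<Longrightarrow> lpair N (Fm N j k) Z = Z (- int j) k ((k + j) mod N)"
proof -
  assume kN: "k < N"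
  have "lpair N (Fm N j k) Z = (\<Sum>a<N. \<Sum>b<N. if a = (k + j) mod N \<and> b = k then Z (- int j) b a else 0)"
    unfolding lpair_SA
  proof (intro sum.cong refl)
    fix a b
    show "Sum_any (\<lambda>p. Fm N j k p a b * Z (- p) b a) = (if a = (k + j) mod N \<and> b = k then Z (- int j) b a else 0)"
      by (subst SA_delta'[of "int j"]) (auto simp: Fm_def)
  qed
  also have "\<dots> = Z (- int j) k ((k + j) mod N)"
    using kN by (intro sum2_delta) auto
  finally show ?thesis .
qed


lemma vb_smul: "vb B X \<Longrightarrow> vb B (\<lambda>n i j. t * X n i j)" by (rule vb_neg)

lemma lpair_Pge: "lpair N (\<lambda>n a b. if 0 \<le> n then X n a b else 0) V = lpair N X (ltrunc V)"
  unfolding lpair_SA ltrunc_def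
  by (intro sum.cong refl arg_cong[where f=Sum_any] ext) auto

lemma grad_C2:
  fixes N m :: nat and \<alpha> :: real and c :: "nat \<Rightarrow> nat \<Rightarrow> real" and d :: "nat \<Rightarrow> real"
  assumes al: "\<alpha> \<noteq> 0" and kN: "k < N" and V: "in_g N V"
  shows "((\<lambda>t. coordfun N \<alpha> (Cc j k) (Lmat N \<alpha> d, ladd (Ym N m \<alpha> c) (lsmul t V)))
            has_real_derivative lpair N (G2C N m \<alpha> c j k) V) (at 0)"
proof -
  let ?U = "Umat N m \<alpha> c" and ?Y = "Ym N m \<alpha> c" and ?K = "(k + j) mod N"
  define Vm where "Vm = ltrunc V"
  have sV: "sqN N V" and tV: "tw N V" using V unfolding in_g_iff by auto
  have vVm: "vb 0 Vm" unfolding Vm_def vb_def ltrunc_def by auto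
  have sVm: "sqN N Vm" using sV unfolding Vm_def sqN_def ltrunc_def by auto
  have tVm: "tw N Vm" using tV unfolding Vm_def tw_def ltrunc_def by auto
  define At where "At t = (\<lambda>n a b. ?Y n a b + t * Vm n a b)" for t
  have ltr: "ltrunc (ladd ?Y (lsmul t V)) = At t" for t
  proof (intro ext)
    fix n a b
    show "ltrunc (ladd ?Y (lsmul t V)) n a b = At t n a b"
      using vb_Y[of N m \<alpha> c] unfolding vb_def ltrunc_def ladd_def lsmul_def At_def Vm_def by auto
  qed
  define f where "f t = coordfun N \<alpha> (Cc j k) (Lmat N \<alpha> d, ladd ?Y (lsmul t V))" for t
  have f_eq: "f t = - (linv N (At t) (- int j) k ?K) / \<alpha>" for t
    unfolding f_def coordfun_def using ltr by simp
  have vAt: "vb 0 (At t)" for t unfolding At_def by (rule vb_add[OF vb_Y vb_smul[OF vVm]])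
  have nz: "?Y n a b \<noteq> 0 \<or> Vm n a b \<noteq> 0" if "At t n a b \<noteq> 0" for t n a b
    using that unfolding At_def by auto
  have sAt: "sqN N (At t)" for t using sqN_Y[of N m \<alpha> c] sVm nz unfolding sqN_def by blast
  have tAt: "tw N (At t)" for t using tw_Y[of N m \<alpha> c] tVm nz unfolding tw_def by blast
  have dAt: "At t 0 a a = 1 + t * Vm 0 a a" if "a < N" for t a
    unfolding At_def using Y0[OF that] that by simp
  have goodAt: "good N (At t)" if "\<forall>a\<in>{..<N}. 1 + t * Vm 0 a a \<noteq> 0" for t
    unfolding good_def using vAt sAt tAt dAt that by auto
  have ev: "\<forall>\<^sub>F t in at 0. \<forall>a\<in>{..<N}. 1 + t * Vm 0 a a \<noteq> 0"
  proof (rule eventually_ball_finite, simp, intro ballI)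
    fix a
    have "((\<lambda>t::real. 1 + t * Vm 0 a a) \<longlongrightarrow> 1) (at 0)" by (intro tendsto_eq_intros) auto
    then show "\<forall>\<^sub>F t in at 0. 1 + t * Vm 0 a a \<noteq> 0" by (rule tendsto_imp_eventually_ne) simp
  qed
  have At0: "At 0 = ?Y" unfolding At_def by simp

  have ident: "RI N (At t) = (\<lambda>n a b. ?U n a b - t * lmul N (lmul N (RI N (At t)) Vm) ?U n a b)"
    if g: "good N (At t)" for t
  proof -
    let ?Z = "RI N (At t)"
    have ZA: "lmul N ?Z (At t) = lone N" by (rule RI_left[OF g])
    have "lmul N ?Z (At t) = (\<lambda>n a b. lmul N ?Z ?Y n a b + t * lmul N ?Z Vm n a b)"
      unfolding At_def by (subst lmul_add_right[OF vb_RI vb_Y vb_smul[OF vVm]]) (simp add: lmul_smul_right)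
    then have ZY: "lmul N ?Z ?Y = (\<lambda>n a b. lone N n a b - t * lmul N ?Z Vm n a b)"
      using ZA by (intro ext) (metis add_diff_cancel_right')
    have "?Z = lmul N ?Z (lmul N ?Y ?U)" using YU lone_right[OF sqN_RI] by simp
    also have "\<dots> = lmul N (lmul N ?Z ?Y) ?U" using lmul_assoc[OF vb_RI vb_Y vb_U] by simp
    also have "\<dots> = (\<lambda>n a b. lmul N (lone N) ?U n a b - lmul N (\<lambda>n a b. t * lmul N ?Z Vm n a b) ?U n a b)"
      unfolding ZY
      by (rule lmul_sub_left[OF vb_lone vb_smul[OF vb_lmul[OF vb_RI vVm, simplified]] vb_U])
    also have "\<dots> = (\<lambda>n a b. ?U n a b - t * lmul N (lmul N ?Z Vm) ?U n a b)"
      by (simp add: lone_left[OF sqN_U] lmul_smul_left)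
    finally show ?thesis .
  qed
  define g where "g t = lmul N (lmul N (RI N (At t)) Vm) ?U (- int j) k ?K / \<alpha>" for t
  have gcont: "isCont g 0"
  proof -
    have cA: "isCont (\<lambda>t. At t n a b) 0" for n a b unfolding At_def by (intro continuous_intros)
    have dA: "At 0 0 a a \<noteq> 0" if "a < N" for a using dAt[OF that] by simp
    have cR: "isCont (\<lambda>t. RI N (At t) n a b) 0" for n a b by (rule RI_cont[where At=At and N=N, OF cA dA])
    have e: "g t = (\<Sum>cc<N. \<Sum>q\<in>{- int j..0}. (\<Sum>e<N. \<Sum>r\<in>{q..0}. RI N (At t) r k e * Vm (q - r) e cc) * ?U (- int j - q) cc ?K) / \<alpha>" for t
      unfolding g_def lmul_win0[OF vb_lmul[OF vb_RI vVm, simplified] vb_U] lmul_win0[OF vb_RI vVm] ..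
    show ?thesis unfolding e[abs_def] using al by (intro continuous_intros cR)
  qed
  have g0: "g 0 = lpair N (G2C N m \<alpha> c j k) V"
  proof -
    have "g 0 = lmul N (lmul N ?U Vm) ?U (- int j) k ?K / \<alpha>"
      unfolding g_def At0 RI_Y ..
    also have "\<dots> = lpair N (Fm N j k) (lmul N (lmul N ?U Vm) ?U) / \<alpha>"
      using lpair_Fm[OF kN] by simp
    also have "lpair N (Fm N j k) (lmul N (lmul N ?U Vm) ?U) = lpair N (lmul N ?U (Fm N j k)) (lmul N ?U Vm)"
      by (rule lpair_cyc[symmetric, of "int j"]) (auto intro: vb_mono[OF vb_U] vb_Fm vb_mono[OF vb_lmul[OF vb_U vVm]])
    also have "\<dots> = lpair N (lmul N (lmul N ?U (Fm N j k)) ?U) Vm"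
      by (rule lpair_assoc[symmetric, of "int j"]) (auto intro: vb_mono[OF vb_U] vb_mono[OF vVm] vb_mono[OF vb_lmul[OF vb_U vb_Fm]])
    also have "\<dots> / \<alpha> = lpair N (G2C N m \<alpha> c j k) V"
    proof -
      have e: "G2C N m \<alpha> c j k = (\<lambda>n a b. (1 / \<alpha>) * (if 0 \<le> n then lmul N (lmul N ?U (Fm N j k)) ?U n a b else 0))"
        unfolding G2C_def by (intro ext) auto
      have "lpair N (G2C N m \<alpha> c j k) V = (1 / \<alpha>) * lpair N (\<lambda>n a b. if 0 \<le> n then lmul N (lmul N ?U (Fm N j k)) ?U n a b else 0) V"
        unfolding e by (rule lpair_smul_left)
      also have "\<dots> = (1 / \<alpha>) * lpair N (lmul N (lmul N ?U (Fm N j k)) ?U) Vm"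
        unfolding Vm_def by (simp only: lpair_Pge)
      finally show ?thesis by simp
    qed
    finally show ?thesis .
  qed
  have quot: "\<forall>\<^sub>F t in at 0. (f t - f 0) / (t - 0) = g t"
  proof -
    have nz: "\<forall>\<^sub>F t in at (0::real). t \<noteq> 0" by (auto simp: eventually_at_filter)
    show ?thesis using ev nz
    proof (rule eventually_elim2)
      fix t :: real assume h: "\<forall>a\<in>{..<N}. 1 + t * Vm 0 a a \<noteq> 0" and t0: "t \<noteq> 0"
      have gt: "good N (At t)" by (rule goodAt[OF h])
      have "f t = - (?U (- int j) k ?K - t * lmul N (lmul N (RI N (At t)) Vm) ?U (- int j) k ?K) / \<alpha>"
        unfolding f_eq linv_good[OF gt] by (subst ident[OF gt]) simp
      moreover have "f 0 = - (?U (- int j) k ?K) / \<alpha>" unfolding f_eq At0 linv_Y ..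
      ultimately show "(f t - f 0) / (t - 0) = g t" unfolding g_def using t0 al
        by (simp add: field_simps)
    qed
  qed
  have "((\<lambda>t. (f t - f 0) / (t - 0)) \<longlongrightarrow> g 0) (at 0)"
    using tendsto_cong[OF quot] gcont unfolding isCont_def by simp
  then have "(f has_field_derivative g 0) (at 0)" by (simp add: has_field_derivative_iff)
  then show ?thesis unfolding g0 f_def .
qed


definition Edel :: "int \<Rightarrow> nat \<Rightarrow> nat \<Rightarrow> lmat" where
  "Edel n0 i0 j0 = (\<lambda>n a b. if n = n0 \<and> a = i0 \<and> b = j0 then 1 else 0)"

lemma lpair_Edel: "i < N \<Longrightarrow> j < N \<Longrightarrow> lpair N X (Edel (- n) j i) = X n i j"
proof -
  assume iN: "i < N" and jN: "j < N"
  have "lpair N X (Edel (- n) j i) = (\<Sum>a<N. \<Sum>b<N. if a = i \<and> b = j then X n a b else 0)"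
    unfolding lpair_SA
  proof (intro sum.cong refl)
    fix a b
    show "Sum_any (\<lambda>p. X p a b * Edel (- n) j i (- p) b a) = (if a = i \<and> b = j then X n a b else 0)"
      by (subst SA_delta'[of n]) (auto simp: Edel_def)
  qed
  also have "\<dots> = X n i j" using iN jN by (rule sum2_delta)
  finally show ?thesis .
qed

lemma in_g_Edel:
  assumes "i < N" "j < N" "n mod int N = (int i - int j) mod int N"
  shows "in_g N (Edel (- n) j i)"
  unfolding in_g_def
proof (intro conjI)
  show "\<exists>b. \<forall>n' i' j'. n' > b \<longrightarrow> Edel (- n) j i n' i' j' = 0"
    by (rule exI[of _ "- n"]) (auto simp: Edel_def)
  have "(- n) mod int N = (- (int i - int j)) mod int N" using assms(3) by (metis mod_minus_eq)
  then show "\<forall>n' i' j'. Edel (- n) j i n' i' j' \<noteq> 0 \<longrightarrow> i' < N \<and> j' < N \<and> n' mod int N = (int i' - int j') mod int N"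
    using assms(1,2) by (auto simp: Edel_def)
qed

lemma pair_determines:
  assumes G: "in_g N G" and G': "in_g N G'" and h: "\<And>V. in_g N V \<Longrightarrow> lpair N G V = lpair N G' V"
  shows "G = G'"
proof (intro ext)
  fix n i j
  show "G n i j = G' n i j"
  proof (cases "G n i j = 0 \<and> G' n i j = 0")
    case False
    then have "i < N \<and> j < N \<and> n mod int N = (int i - int j) mod int N"
      using G G' unfolding in_g_def by blast
    then have "in_g N (Edel (- n) j i)" and "i < N" "j < N" using in_g_Edel by auto
    then show ?thesis using h lpair_Edel by metis
  qed simp
qed

lemma has_grad_unique:
  assumes "has_grad N \<Phi> P G" "has_grad N \<Phi> P G'"
  shows "G = G'"
proof -
  have "fst G = fst G'"
    by (rule pair_determines) (use assms in \<open>auto simp: has_grad_def intro: DERIV_unique\<close>)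
  moreover have "snd G = snd G'"
    by (rule pair_determines) (use assms in \<open>auto simp: has_grad_def intro: DERIV_unique\<close>)
  ultimately show ?thesis by (simp add: prod_eq_iff)
qed

lemma grad_eq: "has_grad N \<Phi> P G \<Longrightarrow> grad N \<Phi> P = G"
  unfolding grad_def using has_grad_unique by blast

lemma RTpt_eq: "RTpt N m \<alpha> d c = (Lmat N \<alpha> d, Ym N m \<alpha> c)"
  unfolding RTpt_def Y_linv ..

definition G1D :: "real \<Rightarrow> nat \<Rightarrow> lmat" where
  "G1D \<alpha> k = (\<lambda>n a b. if n = 0 \<and> a = k \<and> b = k then 1 / \<alpha> else 0)"

definition lz :: lmat where "lz = (\<lambda>n a b. 0)"

lemma in_g_lz: "in_g N lz" unfolding in_g_def lz_def by auto

lemma in_g_G1D: assumes "k < N" shows "in_g N (G1D \<alpha> k)"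
proof -
  have "vb 0 (G1D \<alpha> k)" unfolding vb_def G1D_def by auto
  moreover have "sqN N (G1D \<alpha> k)" using assms unfolding sqN_def G1D_def by auto
  moreover have "tw N (G1D \<alpha> k)" unfolding tw_def G1D_def by auto
  ultimately show ?thesis unfolding in_g_iff by blast
qed

lemma lpair_G1D: "k < N \<Longrightarrow> lpair N (G1D \<alpha> k) V = V 0 k k / \<alpha>"
proof -
  assume kN: "k < N"
  have "lpair N (G1D \<alpha> k) V = (\<Sum>a<N. \<Sum>b<N. if a = k \<and> b = k then V 0 k k / \<alpha> else 0)"
    unfolding lpair_SA
  proof (intro sum.cong refl)
    fix a b
    show "Sum_any (\<lambda>p. G1D \<alpha> k p a b * V (- p) b a) = (if a = k \<and> b = k then V 0 k k / \<alpha> else 0)"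
      by (subst SA_delta'[of 0]) (auto simp: G1D_def)
  qed
  also have "\<dots> = V 0 k k / \<alpha>" by (rule sum2_delta[OF kN kN])
  finally show ?thesis .
qed

lemma has_grad_D:
  assumes kN: "k < N" and al: "\<alpha> \<noteq> 0"
  shows "has_grad N (coordfun N \<alpha> (Dc k)) (RTpt N m \<alpha> d c) (G1D \<alpha> k, lz)"
  unfolding has_grad_def RTpt_eq
proof (intro conjI allI impI)
  fix V assume V: "in_g N V"
  have "((\<lambda>t. (Lmat N \<alpha> d 0 k k + t * V 0 k k - 1) / \<alpha>) has_real_derivative (V 0 k k / \<alpha>)) (at 0)"
    using al by (auto intro!: derivative_eq_intros)
  then show "((\<lambda>t. coordfun N \<alpha> (Dc k) (ladd (fst (Lmat N \<alpha> d, Ym N m \<alpha> c)) (lsmul t V), snd (Lmat N \<alpha> d, Ym N m \<alpha> c)))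
      has_real_derivative lpair N (fst (G1D \<alpha> k, lz)) V) (at 0)"
    by (simp add: coordfun_def ladd_def lsmul_def lpair_G1D[OF kN])
  show "((\<lambda>t. coordfun N \<alpha> (Dc k) (fst (Lmat N \<alpha> d, Ym N m \<alpha> c), ladd (snd (Lmat N \<alpha> d, Ym N m \<alpha> c)) (lsmul t V)))
      has_real_derivative lpair N (snd (G1D \<alpha> k, lz)) V) (at 0)"
    by (simp add: coordfun_def lz_def)
qed (auto simp: in_g_lz in_g_G1D kN)

lemma sqN_Fm: "k < N \<Longrightarrow> sqN N (Fm N j k)"
  unfolding sqN_def Fm_def by auto

lemma tw_Fm: "tw N (Fm N j k)"
  unfolding tw_def Fm_def
proof (intro allI impI)
  fix n a b assume h: "(if n = int j \<and> a = (k + j) mod N \<and> b = k then 1 else 0) \<noteq> (0::real)"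
  then have e: "n = int j" "a = (k + j) mod N" "b = k" by (auto split: if_splits)
  have "(int a - int b) mod int N = ((int k + int j) mod int N - int k) mod int N"
    using e by (simp add: zmod_int)
  also have "\<dots> = (int k + int j - int k) mod int N" by (rule mod_diff_left_eq)
  finally show "n mod int N = (int a - int b) mod int N" using e by simp
qed

lemma in_g_G2C:
  assumes kN: "k < N"
  shows "in_g N (G2C N m \<alpha> c j k)"
proof -
  let ?M = "lmul N (lmul N (Umat N m \<alpha> c) (Fm N j k)) (Umat N m \<alpha> c)"
  have vM: "vb (0 + int j + 0) ?M" by (intro vb_lmul vb_U vb_Fm)
  have sM: "sqN N ?M" by (intro sqN_lmul sqN_U sqN_Fm kN)
  have tM: "tw N ?M" by (intro tw_lmul tw_U tw_Fm)
  have "vb (int j) (G2C N m \<alpha> c j k)" using vM unfolding vb_def G2C_def by auto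
  moreover have "sqN N (G2C N m \<alpha> c j k)" using sM unfolding sqN_def G2C_def by auto
  moreover have "tw N (G2C N m \<alpha> c j k)" using tM unfolding tw_def G2C_def by auto
  ultimately show ?thesis unfolding in_g_iff by blast
qed

lemma has_grad_C:
  assumes kN: "k < N" and al: "\<alpha> \<noteq> 0"
  shows "has_grad N (coordfun N \<alpha> (Cc j k)) (RTpt N m \<alpha> d c) (lz, G2C N m \<alpha> c j k)"
  unfolding has_grad_def RTpt_eq
proof (intro conjI allI impI)
  fix V assume V: "in_g N V"
  show "((\<lambda>t. coordfun N \<alpha> (Cc j k) (ladd (fst (Lmat N \<alpha> d, Ym N m \<alpha> c)) (lsmul t V), snd (Lmat N \<alpha> d, Ym N m \<alpha> c)))
      has_real_derivative lpair N (fst (lz, G2C N m \<alpha> c j k)) V) (at 0)"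
    by (simp add: coordfun_def lz_def)
  show "((\<lambda>t. coordfun N \<alpha> (Cc j k) (fst (Lmat N \<alpha> d, Ym N m \<alpha> c), ladd (snd (Lmat N \<alpha> d, Ym N m \<alpha> c)) (lsmul t V)))
      has_real_derivative lpair N (snd (lz, G2C N m \<alpha> c j k)) V) (at 0)"
    using grad_C2[OF al kN V, where d=d and m=m and c=c and j=j] by simp
qed (auto simp: in_g_lz in_g_G2C kN)

lemma grad_D: "k < N \<Longrightarrow> \<alpha> \<noteq> 0 \<Longrightarrow> grad N (coordfun N \<alpha> (Dc k)) (RTpt N m \<alpha> d c) = (G1D \<alpha> k, lz)"
  by (rule grad_eq[OF has_grad_D])
lemma grad_C: "k < N \<Longrightarrow> \<alpha> \<noteq> 0 \<Longrightarrow> grad N (coordfun N \<alpha> (Cc j k)) (RTpt N m \<alpha> d c) = (lz, G2C N m \<alpha> c j k)"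
  by (rule grad_eq[OF has_grad_C])

lemma unique_grad:
  assumes "valid_coord N m x" "\<alpha> \<noteq> 0"
  shows "\<exists>!G. has_grad N (coordfun N \<alpha> x) (RTpt N m \<alpha> d c) G"
proof (cases x)
  case (Dc k)
  then have "has_grad N (coordfun N \<alpha> x) (RTpt N m \<alpha> d c) (G1D \<alpha> k, lz)"
    using assms has_grad_D[of k N \<alpha>] unfolding valid_coord_def by auto
  then show ?thesis using has_grad_unique by (intro ex1I) blast+
next
  case (Cc j k)
  then have "has_grad N (coordfun N \<alpha> x) (RTpt N m \<alpha> d c) (lz, G2C N m \<alpha> c j k)"
    using assms has_grad_C[of k N \<alpha>] unfolding valid_coord_def by auto
  then show ?thesis using has_grad_unique by (intro ex1I) blast+
qed


lemma ops_lz[simp]: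
  "lmul N lz X = lz" "lmul N X lz = lz" "P0 lz = lz" "Ppos lz = lz" "Pneg lz = lz" "R0 lz = lz"
  "Wop N lz = lz" "Sop N lz = lz" "Sst N lz = lz" "Aone N lz = lz" "Atwo N lz = lz" "lneg lz = lz"
  "lpair N lz X = 0" "lpair N X lz = 0"
  by (auto simp: lz_def P0_def Ppos_def Pneg_def R0_def Wop_def Sop_def Sst_def Aone_def Atwo_def
      lneg_def ladd_def intro!: ext)

lemma pb2_11: "pb2 N P (G1, lz) (H1, lz) = 1/2 * (
      lpair N (Aone N (lmul N G1 (fst P))) (lmul N H1 (fst P))
    - lpair N (Atwo N (lmul N (fst P) G1)) (lmul N (fst P) H1)
    + lpair N (Sop N (lmul N (fst P) G1)) (lmul N H1 (fst P))
    - lpair N (Sst N (lmul N G1 (fst P))) (lmul N (fst P) H1))"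
  by (simp add: pb2_def comp_def bA1_def bA2_def bS_def bSst_def)

lemma pb2_12: "pb2 N P (G1, lz) (lz, H2) = 1/2 * (
      lpair N (Sst N (lmul N G1 (fst P))) (lmul N H2 (snd P))
    - lpair N (Sop N (lmul N (fst P) G1)) (lmul N (snd P) H2)
    + lpair N (Sop N (lmul N (fst P) G1)) (lmul N H2 (snd P))
    - lpair N (Sst N (lmul N G1 (fst P))) (lmul N (snd P) H2))"
  by (simp add: pb2_def comp_def bA1_def bA2_def bS_def bSst_def)

lemma pb2_21: "pb2 N P (lz, G2) (H1, lz) = 1/2 * (
      lpair N (lneg (Sop N (lmul N G2 (snd P)))) (lmul N H1 (fst P))
    - lpair N (lneg (Sst N (lmul N (snd P) G2))) (lmul N (fst P) H1)
    + lpair N (Sop N (lmul N (snd P) G2)) (lmul N H1 (fst P))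
    - lpair N (Sst N (lmul N G2 (snd P))) (lmul N (fst P) H1))"
  by (simp add: pb2_def comp_def bA1_def bA2_def bS_def bSst_def)

lemma pb2_22: "pb2 N P (lz, G2) (lz, H2) = 1/2 * (
      lpair N (Aone N (lmul N G2 (snd P))) (lmul N H2 (snd P))
    - lpair N (Atwo N (lmul N (snd P) G2)) (lmul N (snd P) H2)
    + lpair N (lneg (Sst N (lmul N (snd P) G2))) (lmul N H2 (snd P))
    - lpair N (lneg (Sop N (lmul N G2 (snd P)))) (lmul N (snd P) H2))"
  by (simp add: pb2_def comp_def bA1_def bA2_def bS_def bSst_def)


lemma grad_D': "k < N \<Longrightarrow> \<alpha> \<noteq> 0 \<Longrightarrow> grad N (coordfun N \<alpha> (Dc k)) (Lmat N \<alpha> d, Ym N m \<alpha> c) = (G1D \<alpha> k, lz)"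
  using grad_D[of k N \<alpha> m d c] unfolding RTpt_eq .
lemma grad_C': "k < N \<Longrightarrow> \<alpha> \<noteq> 0 \<Longrightarrow> grad N (coordfun N \<alpha> (Cc j k)) (Lmat N \<alpha> d, Ym N m \<alpha> c) = (lz, G2C N m \<alpha> c j k)"
  using grad_C[of k N \<alpha> j m d c] unfolding RTpt_eq .
lemma rtbr_eq: "rtbr N m \<alpha> d c x y = \<alpha> * pb2 N (Lmat N \<alpha> d, Ym N m \<alpha> c)
   (grad N (coordfun N \<alpha> x) (Lmat N \<alpha> d, Ym N m \<alpha> c)) (grad N (coordfun N \<alpha> y) (Lmat N \<alpha> d, Ym N m \<alpha> c))"
  unfolding rtbr_def Let_def RTpt_eq ..

definition wv :: "nat \<Rightarrow> lmat \<Rightarrow> nat \<Rightarrow> real" where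
  "wv N X a = (\<Sum>k<N. sgn (real k - real a) * X 0 k k)"
definition p0 :: "nat \<Rightarrow> lmat \<Rightarrow> lmat \<Rightarrow> real" where
  "p0 N X Z = (\<Sum>a<N. \<Sum>b<N. X 0 a b * Z 0 b a)"
definition w0 :: "nat \<Rightarrow> lmat \<Rightarrow> lmat \<Rightarrow> real" where
  "w0 N X Z = (\<Sum>a<N. wv N X a * Z 0 a a)"

lemma lpair_deg0Q: "(\<And>n a b. n \<noteq> 0 \<Longrightarrow> Q n a b = 0) \<Longrightarrow> lpair N Q Z = (\<Sum>a<N. \<Sum>b<N. Q 0 a b * Z 0 b a)"
  unfolding lpair_SA by (intro sum.cong refl, subst SA_delta'[of 0]) auto

lemma lpair_P0: "lpair N (P0 X) Z = p0 N X Z"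
  unfolding p0_def by (subst lpair_deg0Q) (auto simp: P0_def)

lemma lpair_W: "lpair N (Wop N X) Z = w0 N X Z"
proof -
  have "lpair N (Wop N X) Z = (\<Sum>a<N. \<Sum>b<N. Wop N X 0 a b * Z 0 b a)"
    by (subst lpair_deg0Q) (auto simp: Wop_def)
  also have "\<dots> = (\<Sum>a<N. \<Sum>b<N. if b = a then wv N X a * Z 0 a a else 0)"
    by (intro sum.cong refl) (auto simp: Wop_def wv_def)
  also have "\<dots> = w0 N X Z" unfolding w0_def by (simp add: sum.delta)
  finally show ?thesis .
qed

lemma lpair_Sop: "lpair N (Sop N X) Z = p0 N X Z - w0 N X Z"
proof -
  have "lpair N (Sop N X) Z = (\<Sum>a<N. \<Sum>b<N. Sop N X 0 a b * Z 0 b a)"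
    by (subst lpair_deg0Q) (auto simp: Sop_def ladd_def lneg_def P0_def Wop_def)
  also have "\<dots> = (\<Sum>a<N. \<Sum>b<N. X 0 a b * Z 0 b a) - (\<Sum>a<N. \<Sum>b<N. Wop N X 0 a b * Z 0 b a)"
    by (simp add: Sop_def ladd_def lneg_def P0_def sum_subtractf[symmetric] left_diff_distrib)
  also have "(\<Sum>a<N. \<Sum>b<N. Wop N X 0 a b * Z 0 b a) = lpair N (Wop N X) Z"
    by (subst lpair_deg0Q) (auto simp: Wop_def)
  finally show ?thesis by (simp add: p0_def lpair_W)
qed

lemma lpair_Sst: "lpair N (Sst N X) Z = p0 N X Z + w0 N X Z"
proof -
  have "lpair N (Sst N X) Z = (\<Sum>a<N. \<Sum>b<N. Sst N X 0 a b * Z 0 b a)"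
    by (subst lpair_deg0Q) (auto simp: Sst_def ladd_def P0_def Wop_def)
  also have "\<dots> = (\<Sum>a<N. \<Sum>b<N. X 0 a b * Z 0 b a) + (\<Sum>a<N. \<Sum>b<N. Wop N X 0 a b * Z 0 b a)"
    by (simp add: Sst_def ladd_def P0_def sum.distrib[symmetric] distrib_right)
  also have "(\<Sum>a<N. \<Sum>b<N. Wop N X 0 a b * Z 0 b a) = lpair N (Wop N X) Z"
    by (subst lpair_deg0Q) (auto simp: Wop_def)
  finally show ?thesis by (simp add: p0_def lpair_W)
qed

lemma lpair_lneg: "lpair N (lneg X) Z = - lpair N X Z"
  using lpair_smul_left[of N "-1" X Z] unfolding lneg_def by simp

lemma vb_R0: "vb B X \<Longrightarrow> vb B (R0 X)"
  unfolding vb_def R0_def ladd_def lneg_def Ppos_def Pneg_def by auto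
lemma vb_W: "vb 0 (Wop N X)"
  unfolding vb_def Wop_def by auto

lemma lpair_Aone:
  assumes "vb B X" "vb C Z"
  shows "lpair N (Aone N X) Z = lpair N (R0 X) Z + w0 N X Z"
proof -
  have "lpair N (Aone N X) Z = lpair N (\<lambda>n i j. R0 X n i j + Wop N X n i j) Z"
    unfolding Aone_def ladd_def ..
  also have "\<dots> = lpair N (R0 X) Z + lpair N (Wop N X) Z"
    by (rule lpair_add_left[of "max B 0" _ _ C]) (use assms in \<open>auto intro: vb_mono[OF vb_R0] vb_mono[OF vb_W]\<close>)
  finally show ?thesis by (simp add: lpair_W)
qed

lemma lpair_Atwo:
  assumes "vb B X" "vb C Z"
  shows "lpair N (Atwo N X) Z = lpair N (R0 X) Z - w0 N X Z"
proof -
  have "lpair N (Atwo N X) Z = lpair N (\<lambda>n i j. R0 X n i j - Wop N X n i j) Z"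
    unfolding Atwo_def ladd_def lneg_def by simp
  also have "\<dots> = lpair N (R0 X) Z - lpair N (Wop N X) Z"
    by (rule lpair_sub_left[of "max B 0" _ _ C]) (use assms in \<open>auto intro: vb_mono[OF vb_R0] vb_mono[OF vb_W]\<close>)
  finally show ?thesis by (simp add: lpair_W)
qed

definition vlow :: "int \<Rightarrow> lmat \<Rightarrow> bool" where
  "vlow B X \<longleftrightarrow> (\<forall>n i j. n < B \<longrightarrow> X n i j = 0)"

lemma vlow_lmul:
  assumes "vlow a X" "vlow b Y"
  shows "vlow (a + b) (lmul N X Y)"
  unfolding vlow_def
proof (intro allI impI)
  fix n i j assume n: "n < a + b"
  show "lmul N X Y n i j = 0"
  proof (rule ccontr)
    assume "lmul N X Y n i j \<noteq> 0"
    then obtain k p where "X p i k \<noteq> 0" "Y (n - p) k j \<noteq> 0" using lmul_nz by blast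
    then have "a \<le> p" "b \<le> n - p" using assms unfolding vlow_def by (meson not_le)+
    then show False using n by linarith
  qed
qed

lemma R0_low: "vlow 0 X \<Longrightarrow> vlow 0 Z \<Longrightarrow> lpair N (R0 X) Z = 0"
  unfolding lpair_SA vlow_def R0_def ladd_def lneg_def Ppos_def Pneg_def
  by (intro sum.neutral ballI, subst SA_win[of "{}"]) auto

lemma vlow_L: "vlow 0 (Lmat N \<alpha> d)" unfolding vlow_def Lmat_def by auto
lemma vlow_G1D: "vlow 0 (G1D \<alpha> k)" unfolding vlow_def G1D_def by auto
lemma vb_L: "vb 1 (Lmat N \<alpha> d)" unfolding vb_def Lmat_def by auto
lemma vb_G1D: "vb 0 (G1D \<alpha> k)" unfolding vb_def G1D_def by auto

lemma G1L0: "k < N \<Longrightarrow> lmul N (G1D \<alpha> k) (Lmat N \<alpha> d) 0 = (\<lambda>a b. if a = k \<and> b = k then (1 + \<alpha> * d k) / \<alpha> else 0)"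
proof (intro ext)
  fix a b assume kN: "k < N"
  have "lmul N (G1D \<alpha> k) (Lmat N \<alpha> d) 0 a b = (\<Sum>cc<N. G1D \<alpha> k 0 a cc * Lmat N \<alpha> d 0 cc b)"
    unfolding lmul_SA by (intro sum.cong refl, subst SA_delta'[of 0]) (auto simp: G1D_def)
  also have "\<dots> = (\<Sum>cc<N. if cc = k then (if a = k \<and> b = k then (1 + \<alpha> * d k) / \<alpha> else 0) else 0)"
    by (intro sum.cong refl) (auto simp: G1D_def Lmat_def)
  also have "\<dots> = (if a = k \<and> b = k then (1 + \<alpha> * d k) / \<alpha> else 0)" using kN by (subst sum.delta) auto
  finally show "lmul N (G1D \<alpha> k) (Lmat N \<alpha> d) 0 a b = (if a = k \<and> b = k then (1 + \<alpha> * d k) / \<alpha> else 0)" .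
qed

lemma LG10: "k < N \<Longrightarrow> lmul N (Lmat N \<alpha> d) (G1D \<alpha> k) 0 = (\<lambda>a b. if a = k \<and> b = k then (1 + \<alpha> * d k) / \<alpha> else 0)"
proof (intro ext)
  fix a b assume kN: "k < N"
  have "lmul N (Lmat N \<alpha> d) (G1D \<alpha> k) 0 a b = (\<Sum>cc<N. Lmat N \<alpha> d 0 a cc * G1D \<alpha> k 0 cc b)"
    unfolding lmul_SA by (intro sum.cong refl, subst SA_delta'[of 0]) (auto simp: G1D_def)
  also have "\<dots> = (\<Sum>cc<N. if cc = k then (if a = k \<and> b = k then (1 + \<alpha> * d k) / \<alpha> else 0) else 0)"
    by (intro sum.cong refl) (auto simp: G1D_def Lmat_def)
  also have "\<dots> = (if a = k \<and> b = k then (1 + \<alpha> * d k) / \<alpha> else 0)" using kN by (subst sum.delta) auto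
  finally show "lmul N (Lmat N \<alpha> d) (G1D \<alpha> k) 0 a b = (if a = k \<and> b = k then (1 + \<alpha> * d k) / \<alpha> else 0)" .
qed

lemma br_DD:
  assumes kN: "k < N" and lN: "l < N" and al: "\<alpha> \<noteq> 0"
  shows "rtbr N m \<alpha> d c (Dc k) (Dc l) = 0"
proof -
  let ?L = "Lmat N \<alpha> d"
  let ?X1 = "lmul N (G1D \<alpha> k) ?L" and ?X2 = "lmul N ?L (G1D \<alpha> k)"
  let ?Z1 = "lmul N (G1D \<alpha> l) ?L" and ?Z2 = "lmul N ?L (G1D \<alpha> l)"
  have v: "vb 1 ?X1" "vb 1 ?X2" "vb 1 ?Z1" "vb 1 ?Z2"
    using vb_lmul[OF vb_G1D vb_L] vb_lmul[OF vb_L vb_G1D] by simp_all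
  have lo: "vlow 0 ?X1" "vlow 0 ?X2" "vlow 0 ?Z1" "vlow 0 ?Z2"
    using vlow_lmul[OF vlow_G1D vlow_L] vlow_lmul[OF vlow_L vlow_G1D] by simp_all
  have e1: "?X2 0 = ?X1 0" using G1L0[OF kN] LG10[OF kN] by simp
  have e2: "?Z2 0 = ?Z1 0" using G1L0[OF lN] LG10[OF lN] by simp
  have "rtbr N m \<alpha> d c (Dc k) (Dc l) = \<alpha> * pb2 N (?L, Ym N m \<alpha> c) (G1D \<alpha> k, lz) (G1D \<alpha> l, lz)"
    unfolding rtbr_eq grad_D'[OF kN al] grad_D'[OF lN al] ..
  also have "\<dots> = \<alpha> * (1/2) * (lpair N (R0 ?X1) ?Z1 + w0 N ?X1 ?Z1 - (lpair N (R0 ?X2) ?Z2 - w0 N ?X2 ?Z2)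
       + (p0 N ?X2 ?Z1 - w0 N ?X2 ?Z1) - (p0 N ?X1 ?Z2 + w0 N ?X1 ?Z2))"
    unfolding pb2_11 fst_conv
    by (simp add: lpair_Aone[OF v(1) v(3)] lpair_Atwo[OF v(2) v(4)] lpair_Sop lpair_Sst)
  also have "\<dots> = 0"
    using R0_low[OF lo(1) lo(3)] R0_low[OF lo(2) lo(4)]
    by (simp add: p0_def w0_def wv_def e1 e2)
  finally show ?thesis .
qed


abbreviation UU where "UU N m \<alpha> c \<equiv> Umat N m \<alpha> c"

definition MM :: "nat \<Rightarrow> nat \<Rightarrow> real \<Rightarrow> (nat \<Rightarrow> nat \<Rightarrow> real) \<Rightarrow> nat \<Rightarrow> nat \<Rightarrow> lmat" where
  "MM N m \<alpha> c j k = lmul N (lmul N (Umat N m \<alpha> c) (Fm N j k)) (Umat N m \<alpha> c)"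

lemma vb_Pneg: "vb (-1) (Pneg X)" unfolding vb_def Pneg_def by auto
lemma vb_MM: "vb (int j) (MM N m \<alpha> c j k)"
  unfolding MM_def using vb_lmul[OF vb_lmul[OF vb_U vb_Fm] vb_U] by simp
lemma sqN_MM: "k < N \<Longrightarrow> sqN N (MM N m \<alpha> c j k)"
  unfolding MM_def by (intro sqN_lmul sqN_U sqN_Fm)

lemma G2C_eq: "G2C N m \<alpha> c j k = (\<lambda>n a b. (1/\<alpha>) * (MM N m \<alpha> c j k n a b - Pneg (MM N m \<alpha> c j k) n a b))"
  unfolding G2C_def MM_def Pneg_def by (intro ext) auto

lemma MY: "k < N \<Longrightarrow> lmul N (MM N m \<alpha> c j k) (Ym N m \<alpha> c) = lmul N (Umat N m \<alpha> c) (Fm N j k)"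
proof -
  assume kN: "k < N"
  have "lmul N (MM N m \<alpha> c j k) (Ym N m \<alpha> c) = lmul N (lmul N (Umat N m \<alpha> c) (Fm N j k)) (lmul N (Umat N m \<alpha> c) (Ym N m \<alpha> c))"
    unfolding MM_def by (rule lmul_assoc[of "int j"]) (auto intro: vb_mono[OF vb_U] vb_mono[OF vb_Y] vb_mono[OF vb_lmul[OF vb_U vb_Fm]])
  also have "\<dots> = lmul N (Umat N m \<alpha> c) (Fm N j k)"
    unfolding UY by (rule lone_right, intro sqN_lmul sqN_U sqN_Fm kN)
  finally show ?thesis .
qed

lemma YM: "k < N \<Longrightarrow> lmul N (Ym N m \<alpha> c) (MM N m \<alpha> c j k) = lmul N (Fm N j k) (Umat N m \<alpha> c)"
proof -
  assume kN: "k < N"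
  have "MM N m \<alpha> c j k = lmul N (Umat N m \<alpha> c) (lmul N (Fm N j k) (Umat N m \<alpha> c))"
    unfolding MM_def by (rule lmul_assoc[of "int j"]) (auto intro: vb_mono[OF vb_U] vb_Fm)
  then have "lmul N (Ym N m \<alpha> c) (MM N m \<alpha> c j k) = lmul N (lmul N (Ym N m \<alpha> c) (Umat N m \<alpha> c)) (lmul N (Fm N j k) (Umat N m \<alpha> c))"
    by (simp add: lmul_assoc[of "int j"] vb_mono[OF vb_U] vb_mono[OF vb_Y] vb_mono[OF vb_lmul[OF vb_Fm vb_U], simplified] vb_Fm)
  also have "\<dots> = lmul N (Fm N j k) (Umat N m \<alpha> c)"
    unfolding YU by (rule lone_left, intro sqN_lmul sqN_U sqN_Fm kN)
  finally show ?thesis .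
qed

lemma GY: "k < N \<Longrightarrow> lmul N (G2C N m \<alpha> c j k) (Ym N m \<alpha> c) =
   (\<lambda>n a b. (1/\<alpha>) * (lmul N (Umat N m \<alpha> c) (Fm N j k) n a b - lmul N (Pneg (MM N m \<alpha> c j k)) (Ym N m \<alpha> c) n a b))"
proof -
  assume kN: "k < N"
  have "lmul N (G2C N m \<alpha> c j k) (Ym N m \<alpha> c) = (\<lambda>n a b. (1/\<alpha>) * lmul N (\<lambda>n a b. MM N m \<alpha> c j k n a b - Pneg (MM N m \<alpha> c j k) n a b) (Ym N m \<alpha> c) n a b)"
    unfolding G2C_eq lmul_smul_left ..
  also have "lmul N (\<lambda>n a b. MM N m \<alpha> c j k n a b - Pneg (MM N m \<alpha> c j k) n a b) (Ym N m \<alpha> c) =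
     (\<lambda>n a b. lmul N (MM N m \<alpha> c j k) (Ym N m \<alpha> c) n a b - lmul N (Pneg (MM N m \<alpha> c j k)) (Ym N m \<alpha> c) n a b)"
    by (rule lmul_sub_left[of "int j" _ _ 0]) (auto intro: vb_MM vb_mono[OF vb_Pneg] vb_Y)
  finally show ?thesis unfolding MY[OF kN] .
qed

lemma YG: "k < N \<Longrightarrow> lmul N (Ym N m \<alpha> c) (G2C N m \<alpha> c j k) =
   (\<lambda>n a b. (1/\<alpha>) * (lmul N (Fm N j k) (Umat N m \<alpha> c) n a b - lmul N (Ym N m \<alpha> c) (Pneg (MM N m \<alpha> c j k)) n a b))"
proof -
  assume kN: "k < N"
  have "lmul N (Ym N m \<alpha> c) (G2C N m \<alpha> c j k) = (\<lambda>n a b. (1/\<alpha>) * lmul N (Ym N m \<alpha> c) (\<lambda>n a b. MM N m \<alpha> c j k n a b - Pneg (MM N m \<alpha> c j k) n a b) n a b)"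
    unfolding G2C_eq lmul_smul_right ..
  also have "lmul N (Ym N m \<alpha> c) (\<lambda>n a b. MM N m \<alpha> c j k n a b - Pneg (MM N m \<alpha> c j k) n a b) =
     (\<lambda>n a b. lmul N (Ym N m \<alpha> c) (MM N m \<alpha> c j k) n a b - lmul N (Ym N m \<alpha> c) (Pneg (MM N m \<alpha> c j k)) n a b)"
    by (rule lmul_sub_right[of 0 _ "int j"]) (auto intro: vb_MM vb_mono[OF vb_Pneg] vb_Y)
  finally show ?thesis unfolding YM[OF kN] .
qed

lemma GY_nn: "k < N \<Longrightarrow> 0 \<le> n \<Longrightarrow> lmul N (G2C N m \<alpha> c j k) (Ym N m \<alpha> c) n a b = lmul N (Umat N m \<alpha> c) (Fm N j k) n a b / \<alpha>"
  unfolding GY using vbD[OF vb_lmul[OF vb_Pneg vb_Y]] by fastforce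
lemma YG_nn: "k < N \<Longrightarrow> 0 \<le> n \<Longrightarrow> lmul N (Ym N m \<alpha> c) (G2C N m \<alpha> c j k) n a b = lmul N (Fm N j k) (Umat N m \<alpha> c) n a b / \<alpha>"
  unfolding YG using vbD[OF vb_lmul[OF vb_Y vb_Pneg]] by fastforce

lemma UF_eq: "k < N \<Longrightarrow> lmul N (Umat N m \<alpha> c) (Fm N j k) n a b = (if b = k then Umat N m \<alpha> c (n - int j) a ((k + j) mod N) else 0)"
proof -
  assume kN: "k < N"
  have "lmul N (Umat N m \<alpha> c) (Fm N j k) n a b = (\<Sum>cc<N. Umat N m \<alpha> c (n - int j) a cc * Fm N j k (int j) cc b)"
    unfolding lmul_SA by (intro sum.cong refl, subst SA_delta'[of "n - int j"]) (auto simp: Fm_def)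
  also have "\<dots> = (\<Sum>cc<N. if cc = (k + j) mod N then (if b = k then Umat N m \<alpha> c (n - int j) a ((k + j) mod N) else 0) else 0)"
    by (intro sum.cong refl) (auto simp: Fm_def)
  also have "\<dots> = (if b = k then Umat N m \<alpha> c (n - int j) a ((k + j) mod N) else 0)"
    using kN by (subst sum.delta) auto
  finally show ?thesis .
qed

lemma FU_eq: "k < N \<Longrightarrow> lmul N (Fm N j k) (Umat N m \<alpha> c) n a b = (if a = (k + j) mod N then Umat N m \<alpha> c (n - int j) k b else 0)"
proof -
  assume kN: "k < N"
  have "lmul N (Fm N j k) (Umat N m \<alpha> c) n a b = (\<Sum>cc<N. Fm N j k (int j) a cc * Umat N m \<alpha> c (n - int j) cc b)"
    unfolding lmul_SA by (intro sum.cong refl, subst SA_delta'[of "int j"]) (auto simp: Fm_def)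
  also have "\<dots> = (\<Sum>cc<N. if cc = k then (if a = (k + j) mod N then Umat N m \<alpha> c (n - int j) k b else 0) else 0)"
    by (intro sum.cong refl) (auto simp: Fm_def)
  also have "\<dots> = (if a = (k + j) mod N then Umat N m \<alpha> c (n - int j) k b else 0)"
    using kN by (subst sum.delta) auto
  finally show ?thesis .
qed

lemma U_mj: "k < N \<Longrightarrow> 1 \<le> j \<Longrightarrow> j \<le> m \<Longrightarrow> Umat N m \<alpha> c (- int j) k ((k + j) mod N) = - \<alpha> * c j k"
  unfolding Umat_def lone_def by auto


lemma p0_dr: "a < N \<Longrightarrow> Z 0 = (\<lambda>x y. if x = a \<and> y = a then v else 0) \<Longrightarrow> p0 N X Z = X 0 a a * v"
proof -
  assume aN: "a < N" and z: "Z 0 = (\<lambda>x y. if x = a \<and> y = a then v else 0)"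
  have "p0 N X Z = (\<Sum>x<N. \<Sum>y<N. if x = a \<and> y = a then X 0 x y * v else 0)"
    unfolding p0_def z by (intro sum.cong refl) auto
  also have "\<dots> = X 0 a a * v" by (rule sum2_delta[OF aN aN])
  finally show ?thesis .
qed

lemma p0_dl: "a < N \<Longrightarrow> X 0 = (\<lambda>x y. if x = a \<and> y = a then v else 0) \<Longrightarrow> p0 N X Z = v * Z 0 a a"
proof -
  assume aN: "a < N" and z: "X 0 = (\<lambda>x y. if x = a \<and> y = a then v else 0)"
  have "p0 N X Z = (\<Sum>x<N. \<Sum>y<N. if x = a \<and> y = a then v * Z 0 y x else 0)"
    unfolding p0_def z by (intro sum.cong refl) auto
  also have "\<dots> = v * Z 0 a a" by (rule sum2_delta[OF aN aN])
  finally show ?thesis .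
qed

lemma br_DC:
  assumes aN: "a < N" and kN: "k < N" and j1: "1 \<le> j" and jm: "j \<le> m" and al: "\<alpha> \<noteq> 0"
  shows "rtbr N m \<alpha> d c (Dc a) (Cc j k) =
     - (1 + \<alpha> * d a) * c j k * ((if a = k then 1 else 0) - (if a = (k + j) mod N then 1 else 0))"
proof -
  let ?L = "Lmat N \<alpha> d" and ?Y = "Ym N m \<alpha> c" and ?G = "G2C N m \<alpha> c j k"
  let ?X1 = "lmul N (G1D \<alpha> a) ?L" and ?X2 = "lmul N ?L (G1D \<alpha> a)"
  let ?Z1 = "lmul N ?G ?Y" and ?Z2 = "lmul N ?Y ?G"
  let ?v = "(1 + \<alpha> * d a) / \<alpha>"
  have e1: "?X2 0 = ?X1 0" using G1L0[OF aN] LG10[OF aN] by simp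
  have "rtbr N m \<alpha> d c (Dc a) (Cc j k) = \<alpha> * pb2 N (?L, ?Y) (G1D \<alpha> a, lz) (lz, ?G)"
    unfolding rtbr_eq grad_D'[OF aN al] grad_C'[OF kN al] ..
  also have "\<dots> = \<alpha> * (1/2) * ((p0 N ?X1 ?Z1 + w0 N ?X1 ?Z1) - (p0 N ?X2 ?Z2 - w0 N ?X2 ?Z2)
       + (p0 N ?X2 ?Z1 - w0 N ?X2 ?Z1) - (p0 N ?X1 ?Z2 + w0 N ?X1 ?Z2))"
    unfolding pb2_12 fst_conv snd_conv by (simp add: lpair_Sop lpair_Sst)
  also have "\<dots> = \<alpha> * (p0 N ?X1 ?Z1 - p0 N ?X1 ?Z2)"
    by (simp add: p0_def w0_def wv_def e1 algebra_simps)
  also have "\<dots> = \<alpha> * (?v * ?Z1 0 a a - ?v * ?Z2 0 a a)"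
    using p0_dl[where X="?X1" and Z="?Z1", OF aN G1L0[OF aN]] p0_dl[where X="?X1" and Z="?Z2", OF aN G1L0[OF aN]] by simp
  also have "?Z1 0 a a = (if a = k then - \<alpha> * c j k else 0) / \<alpha>"
    using GY_nn[OF kN, of 0] UF_eq[OF kN] U_mj[OF kN j1 jm] by simp
  also have "?Z2 0 a a = (if a = (k + j) mod N then - \<alpha> * c j k else 0) / \<alpha>"
    using YG_nn[OF kN, of 0] FU_eq[OF kN] U_mj[OF kN j1 jm] by simp
  finally have r: "rtbr N m \<alpha> d c (Dc a) (Cc j k) = \<alpha> * (?v * ((if a = k then - \<alpha> * c j k else 0) / \<alpha>) - ?v * ((if a = (k + j) mod N then - \<alpha> * c j k else 0) / \<alpha>))" .
  show ?thesis unfolding r using al by (cases "a = k"; cases "a = (k + j) mod N") (simp_all add: field_simps)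
qed

lemma br_CD:
  assumes aN: "a < N" and kN: "k < N" and j1: "1 \<le> j" and jm: "j \<le> m" and al: "\<alpha> \<noteq> 0"
  shows "rtbr N m \<alpha> d c (Cc j k) (Dc a) =
     (1 + \<alpha> * d a) * c j k * ((if a = k then 1 else 0) - (if a = (k + j) mod N then 1 else 0))"
proof -
  let ?L = "Lmat N \<alpha> d" and ?Y = "Ym N m \<alpha> c" and ?G = "G2C N m \<alpha> c j k"
  let ?Z1 = "lmul N (G1D \<alpha> a) ?L" and ?Z2 = "lmul N ?L (G1D \<alpha> a)"
  let ?X = "lmul N ?G ?Y" and ?X' = "lmul N ?Y ?G"
  let ?v = "(1 + \<alpha> * d a) / \<alpha>"
  have e1: "?Z2 0 = ?Z1 0" using G1L0[OF aN] LG10[OF aN] by simp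
  have "rtbr N m \<alpha> d c (Cc j k) (Dc a) = \<alpha> * pb2 N (?L, ?Y) (lz, ?G) (G1D \<alpha> a, lz)"
    unfolding rtbr_eq grad_D'[OF aN al] grad_C'[OF kN al] ..
  also have "\<dots> = \<alpha> * (1/2) * (- (p0 N ?X ?Z1 - w0 N ?X ?Z1) - (- (p0 N ?X' ?Z2 + w0 N ?X' ?Z2))
       + (p0 N ?X' ?Z1 - w0 N ?X' ?Z1) - (p0 N ?X ?Z2 + w0 N ?X ?Z2))"
    unfolding pb2_21 fst_conv snd_conv by (simp add: lpair_Sop lpair_Sst lpair_lneg)
  also have "\<dots> = \<alpha> * (p0 N ?X' ?Z1 - p0 N ?X ?Z1)"
    by (simp add: p0_def w0_def wv_def e1 algebra_simps)
  also have "\<dots> = \<alpha> * (?X' 0 a a * ?v - ?X 0 a a * ?v)"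
    using p0_dr[where Z="?Z1" and X="?X", OF aN G1L0[OF aN]] p0_dr[where Z="?Z1" and X="?X'", OF aN G1L0[OF aN]] by simp
  also have "?X 0 a a = (if a = k then - \<alpha> * c j k else 0) / \<alpha>"
    using GY_nn[OF kN, of 0] UF_eq[OF kN] U_mj[OF kN j1 jm] by simp
  also have "?X' 0 a a = (if a = (k + j) mod N then - \<alpha> * c j k else 0) / \<alpha>"
    using YG_nn[OF kN, of 0] FU_eq[OF kN] U_mj[OF kN j1 jm] by simp
  finally have r: "rtbr N m \<alpha> d c (Cc j k) (Dc a) = \<alpha> * ((if a = (k + j) mod N then - \<alpha> * c j k else 0) / \<alpha> * ?v - (if a = k then - \<alpha> * c j k else 0) / \<alpha> * ?v)" .
  show ?thesis unfolding r using al by (cases "a = k"; cases "a = (k + j) mod N") (simp_all add: field_simps)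
qed


definition Ple :: "lmat \<Rightarrow> lmat" where "Ple X = (\<lambda>n a b. if n \<le> 0 then X n a b else 0)"

lemma vbm: "vb B X \<Longrightarrow> B \<le> C \<Longrightarrow> vb C X" by (rule vb_mono)

lemma vb_G2C: "vb (int j) (G2C N m \<alpha> c j k)"
  unfolding vb_def G2C_def using vbD[OF vb_MM[unfolded MM_def]] by fastforce
lemma vb_Ppos: "vb B X \<Longrightarrow> vb B (Ppos X)" unfolding vb_def Ppos_def by auto
lemma vb_Ple: "vb 0 (Ple X)" unfolding vb_def Ple_def by auto
lemma vb_P0: "vb 0 (P0 X)" unfolding vb_def P0_def by auto
lemma vb_UF: "vb (int j) (lmul N (Umat N m \<alpha> c) (Fm N j k))"
  using vb_lmul[OF vb_U vb_Fm] by simp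
lemma vb_FU: "vb (int j) (lmul N (Fm N j k) (Umat N m \<alpha> c))"
  using vb_lmul[OF vb_Fm vb_U] by simp
lemma vb_GY: "vb (int j) (lmul N (G2C N m \<alpha> c j k) (Ym N m \<alpha> c))"
  using vb_lmul[OF vb_G2C vb_Y] by simp
lemma vb_YG: "vb (int j) (lmul N (Ym N m \<alpha> c) (G2C N m \<alpha> c j k))"
  using vb_lmul[OF vb_Y vb_G2C] by simp

lemma R0_split:
  assumes "vb B X" "vb C Z" "0 \<le> B"
  shows "lpair N (R0 X) Z = 2 * lpair N (Ppos X) Z + p0 N X Z - lpair N X Z"
proof -
  have e: "R0 X = (\<lambda>n a b. (2 * Ppos X n a b + P0 X n a b) - X n a b)"
    unfolding R0_def ladd_def lneg_def Ppos_def Pneg_def P0_def by (intro ext) auto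
  have "lpair N (R0 X) Z = lpair N (\<lambda>n a b. 2 * Ppos X n a b + P0 X n a b) Z - lpair N X Z"
    unfolding e by (rule lpair_sub_left[of B _ _ C]) (use assms in \<open>auto intro!: vb_add vb_neg vb_Ppos vbm[OF vb_P0]\<close>)
  also have "lpair N (\<lambda>n a b. 2 * Ppos X n a b + P0 X n a b) Z = lpair N (\<lambda>n a b. 2 * Ppos X n a b) Z + lpair N (P0 X) Z"
    by (rule lpair_add_left[of B _ _ C]) (use assms in \<open>auto intro!: vb_neg vb_Ppos vbm[OF vb_P0]\<close>)
  finally show ?thesis by (simp add: lpair_smul_left lpair_P0)
qed

lemma pair_sym_GY:
  assumes "int i \<le> B" "int j \<le> B" "0 \<le> B"
  shows "lpair N (lmul N (G2C N m \<alpha> c i k) (Ym N m \<alpha> c)) (lmul N (G2C N m \<alpha> c j k') (Ym N m \<alpha> c))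
       = lpair N (lmul N (Ym N m \<alpha> c) (G2C N m \<alpha> c i k)) (lmul N (Ym N m \<alpha> c) (G2C N m \<alpha> c j k'))"
proof -
  let ?G = "G2C N m \<alpha> c i k" and ?H = "G2C N m \<alpha> c j k'" and ?Y = "Ym N m \<alpha> c"
  have v: "vb B ?G" "vb B ?H" "vb B ?Y" "vb B (lmul N ?H ?Y)" "vb B (lmul N ?Y ?G)" "vb B (lmul N ?Y ?H)"
    using assms by (auto intro: vbm[OF vb_G2C] vbm[OF vb_Y] vbm[OF vb_GY] vbm[OF vb_YG])
  have "lpair N (lmul N ?G ?Y) (lmul N ?H ?Y) = lpair N ?Y (lmul N (lmul N ?H ?Y) ?G)"
    by (rule lpair_cyc[OF v(1) v(3) v(4)])
  also have "\<dots> = lpair N ?Y (lmul N ?H (lmul N ?Y ?G))" by (simp add: lmul_assoc[OF v(2) v(3) v(1)])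
  also have "\<dots> = lpair N (lmul N ?Y ?H) (lmul N ?Y ?G)" by (rule lpair_assoc[symmetric, OF v(3) v(2) v(5)])
  also have "\<dots> = lpair N (lmul N ?Y ?G) (lmul N ?Y ?H)" by (rule lpair_sym)
  finally show ?thesis .
qed


lemma Ppos_split: "Ppos X = (\<lambda>n a b. X n a b - Ple X n a b)"
  unfolding Ppos_def Ple_def by (intro ext) auto

lemma lemB:
  assumes kN: "k < N" and kN': "k' < N"
  shows "lpair N (Ppos (lmul N (G2C N m \<alpha> c i k) (Ym N m \<alpha> c))) (lmul N (G2C N m \<alpha> c j k') (Ym N m \<alpha> c))
   = (1/\<alpha>) * ((1/\<alpha>) * (lpair N (Ppos (lmul N (Umat N m \<alpha> c) (Fm N i k))) (lmul N (Umat N m \<alpha> c) (Fm N j k'))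
        - lpair N (Fm N i k) (Pneg (MM N m \<alpha> c j k'))))"
proof -
  let ?U = "Umat N m \<alpha> c" and ?Y = "Ym N m \<alpha> c"
  let ?A = "Ppos (lmul N ?U (Fm N i k))" and ?B = "lmul N ?U (Fm N j k')" and ?Nm = "Pneg (MM N m \<alpha> c j k')"
  let ?C = "lmul N ?Nm ?Y"
  define B where "B = int i + int j"
  have v: "vb B ?A" "vb B ?B" "vb B ?C" "vb B ?Y" "vb B ?Nm" "vb B (Fm N i k)"
    unfolding B_def by (auto intro!: vb_Ppos vbm[OF vb_UF] vbm[OF vb_lmul[OF vb_Pneg vb_Y]] vbm[OF vb_Y] vbm[OF vb_Pneg] vbm[OF vb_Fm])
  have e1: "Ppos (lmul N (G2C N m \<alpha> c i k) ?Y) = (\<lambda>n a b. (1/\<alpha>) * ?A n a b)"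
    by (intro ext) (simp add: Ppos_def GY_nn[OF kN])
  have e2: "lmul N (G2C N m \<alpha> c j k') ?Y = (\<lambda>n a b. (1/\<alpha>) * (?B n a b - ?C n a b))"
    by (rule GY[OF kN'])
  have "lpair N (Ppos (lmul N (G2C N m \<alpha> c i k) ?Y)) (lmul N (G2C N m \<alpha> c j k') ?Y)
     = (1/\<alpha>) * ((1/\<alpha>) * (lpair N ?A ?B - lpair N ?A ?C))"
    unfolding e1 e2 lpair_smul_left lpair_smul_right by (simp add: lpair_sub_right[OF v(2) v(3) v(1)])
  also have "lpair N ?A ?C = lpair N (lmul N ?Y ?A) ?Nm"
    by (rule lpair_cyc[symmetric, OF v(4) v(1) v(5)])
  also have "lmul N ?Y ?A = (\<lambda>n a b. Fm N i k n a b - lmul N ?Y (Ple (lmul N ?U (Fm N i k))) n a b)"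
  proof -
    have "lmul N ?Y ?A = (\<lambda>n a b. lmul N ?Y (lmul N ?U (Fm N i k)) n a b - lmul N ?Y (Ple (lmul N ?U (Fm N i k))) n a b)"
      unfolding Ppos_split[of "lmul N ?U (Fm N i k)"]
      by (rule lmul_sub_right[of 0 _ "int i"]) (auto intro: vb_Y vb_UF vbm[OF vb_Ple])
    also have "lmul N ?Y (lmul N ?U (Fm N i k)) = Fm N i k"
      by (simp add: lmul_assoc[symmetric, of "int i"] vbm[OF vb_Y] vbm[OF vb_U] vb_Fm YU lone_left sqN_Fm[OF kN])
    finally show ?thesis .
  qed
  also have "lpair N (\<lambda>n a b. Fm N i k n a b - lmul N ?Y (Ple (lmul N ?U (Fm N i k))) n a b) ?Nm
      = lpair N (Fm N i k) ?Nm - lpair N (lmul N ?Y (Ple (lmul N ?U (Fm N i k)))) ?Nm"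
    by (rule lpair_sub_left[of B _ _ B]) (use v in \<open>auto intro: vbm[OF vb_lmul[OF vb_Y vb_Ple]] simp: B_def\<close>)
  also have "lpair N (lmul N ?Y (Ple (lmul N ?U (Fm N i k)))) ?Nm = 0"
    by (rule lpair_deg[of 0 _ "-1"]) (use vb_lmul[OF vb_Y vb_Ple] vb_Pneg in auto)
  finally show ?thesis by simp
qed

lemma lemC:
  assumes kN: "k < N" and kN': "k' < N"
  shows "lpair N (Ppos (lmul N (Ym N m \<alpha> c) (G2C N m \<alpha> c i k))) (lmul N (Ym N m \<alpha> c) (G2C N m \<alpha> c j k'))
   = (1/\<alpha>) * ((1/\<alpha>) * (lpair N (Ppos (lmul N (Fm N i k) (Umat N m \<alpha> c))) (lmul N (Fm N j k') (Umat N m \<alpha> c))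
        - lpair N (Fm N i k) (Pneg (MM N m \<alpha> c j k'))))"
proof -
  let ?U = "Umat N m \<alpha> c" and ?Y = "Ym N m \<alpha> c"
  let ?A = "Ppos (lmul N (Fm N i k) ?U)" and ?B = "lmul N (Fm N j k') ?U" and ?Nm = "Pneg (MM N m \<alpha> c j k')"
  let ?C = "lmul N ?Y ?Nm"
  define B where "B = int i + int j"
  have v: "vb B ?A" "vb B ?B" "vb B ?C" "vb B ?Y" "vb B ?Nm" "vb B (Fm N i k)"
    unfolding B_def by (auto intro!: vb_Ppos vbm[OF vb_FU] vbm[OF vb_lmul[OF vb_Y vb_Pneg]] vbm[OF vb_Y] vbm[OF vb_Pneg] vbm[OF vb_Fm])
  have e1: "Ppos (lmul N ?Y (G2C N m \<alpha> c i k)) = (\<lambda>n a b. (1/\<alpha>) * ?A n a b)"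
    by (intro ext) (simp add: Ppos_def YG_nn[OF kN])
  have e2: "lmul N ?Y (G2C N m \<alpha> c j k') = (\<lambda>n a b. (1/\<alpha>) * (?B n a b - ?C n a b))"
    by (rule YG[OF kN'])
  have "lpair N (Ppos (lmul N ?Y (G2C N m \<alpha> c i k))) (lmul N ?Y (G2C N m \<alpha> c j k'))
     = (1/\<alpha>) * ((1/\<alpha>) * (lpair N ?A ?B - lpair N ?A ?C))"
    unfolding e1 e2 lpair_smul_left lpair_smul_right by (simp add: lpair_sub_right[OF v(2) v(3) v(1)])
  also have "lpair N ?A ?C = lpair N (lmul N ?A ?Y) ?Nm"
    by (rule lpair_assoc[symmetric, OF v(1) v(4) v(5)])
  also have "lmul N ?A ?Y = (\<lambda>n a b. Fm N i k n a b - lmul N (Ple (lmul N (Fm N i k) ?U)) ?Y n a b)"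
  proof -
    have "lmul N ?A ?Y = (\<lambda>n a b. lmul N (lmul N (Fm N i k) ?U) ?Y n a b - lmul N (Ple (lmul N (Fm N i k) ?U)) ?Y n a b)"
      unfolding Ppos_split[of "lmul N (Fm N i k) ?U"]
      by (rule lmul_sub_left[of "int i" _ _ 0]) (auto intro: vb_Y vb_FU vbm[OF vb_Ple])
    also have "lmul N (lmul N (Fm N i k) ?U) ?Y = Fm N i k"
      by (simp add: lmul_assoc[of "int i"] vbm[OF vb_Y] vbm[OF vb_U] vb_Fm UY lone_right sqN_Fm[OF kN])
    finally show ?thesis .
  qed
  also have "lpair N (\<lambda>n a b. Fm N i k n a b - lmul N (Ple (lmul N (Fm N i k) ?U)) ?Y n a b) ?Nm
      = lpair N (Fm N i k) ?Nm - lpair N (lmul N (Ple (lmul N (Fm N i k) ?U)) ?Y) ?Nm"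
    by (rule lpair_sub_left[of B _ _ B]) (use v in \<open>auto intro: vbm[OF vb_lmul[OF vb_Ple vb_Y]] simp: B_def\<close>)
  also have "lpair N (lmul N (Ple (lmul N (Fm N i k) ?U)) ?Y) ?Nm = 0"
    by (rule lpair_deg[of 0 _ "-1"]) (use vb_lmul[OF vb_Ple vb_Y] vb_Pneg in auto)
  finally show ?thesis by simp
qed


lemma mod_cancel_lt:
  fixes a k i N :: nat
  assumes "a < N" "k < N" "(a + i) mod N = (k + i) mod N"
  shows "a = k"
proof -
  have "(int a + int i) mod int N = (int k + int i) mod int N" using assms(3) by (metis of_nat_add zmod_int)
  then have "((int a + int i) - int i) mod int N = ((int k + int i) - int i) mod int N" by (rule mod_diff_cong) simp
  then have "int (a mod N) = int (k mod N)" by (simp add: zmod_int)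
  then show ?thesis using assms(1,2) by simp
qed

lemma U_col: "k < N \<Longrightarrow> 1 \<le> i \<Longrightarrow> i \<le> m \<Longrightarrow> Umat N m \<alpha> c (- int i) a ((k + i) mod N) = (if a = k then - \<alpha> * c i k else 0)"
  unfolding Umat_def lone_def using mod_cancel_lt[of a N k i] by (auto simp: mod_less_divisor)

lemma U_row: "k < N \<Longrightarrow> 1 \<le> i \<Longrightarrow> i \<le> m \<Longrightarrow> Umat N m \<alpha> c (- int i) k b = (if b = (k + i) mod N then - \<alpha> * c i k else 0)"
  unfolding Umat_def lone_def by auto

lemma GY0:
  assumes "k < N" "1 \<le> i" "i \<le> m" "\<alpha> \<noteq> 0"
  shows "lmul N (G2C N m \<alpha> c i k) (Ym N m \<alpha> c) 0 = (\<lambda>a b. if a = k \<and> b = k then - c i k else 0)"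
  using assms by (intro ext) (simp add: GY_nn UF_eq U_col)

lemma YG0:
  assumes "k < N" "1 \<le> i" "i \<le> m" "\<alpha> \<noteq> 0"
  shows "lmul N (Ym N m \<alpha> c) (G2C N m \<alpha> c i k) 0 = (\<lambda>a b. if a = (k + i) mod N \<and> b = (k + i) mod N then - c i k else 0)"
  using assms by (intro ext) (simp add: YG_nn FU_eq U_row)

lemma p0_dd:
  assumes "a < N" "b < N" "X 0 = (\<lambda>x y. if x = a \<and> y = a then u else 0)" "Z 0 = (\<lambda>x y. if x = b \<and> y = b then v else 0)"
  shows "p0 N X Z = (if a = b then u * v else 0)"
  using p0_dl[where X=X and Z=Z, OF assms(1) assms(3)] assms(4) by simp

lemma w0_dd:
  assumes "a < N" "b < N" "X 0 = (\<lambda>x y. if x = a \<and> y = a then u else 0)" "Z 0 = (\<lambda>x y. if x = b \<and> y = b then v else 0)"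
  shows "w0 N X Z = sgn (real a - real b) * u * v"
proof -
  have "wv N X e = sgn (real a - real e) * u" for e
  proof -
    have "wv N X e = (\<Sum>kk<N. if kk = a then sgn (real kk - real e) * u else 0)"
      unfolding wv_def assms(3) by (intro sum.cong refl) auto
    then show ?thesis using assms(1) by (simp add: sum.delta)
  qed
  then have "w0 N X Z = (\<Sum>e<N. if e = b then sgn (real a - real e) * u * v else 0)"
    unfolding w0_def assms(4) by (intro sum.cong refl) auto
  then show ?thesis using assms(2) by (simp add: sum.delta)
qed

definition Qf :: "nat \<Rightarrow> nat \<Rightarrow> nat \<Rightarrow> nat \<Rightarrow> real" where
  "Qf k k' K K' = (if k = k' then 1 else 0) - (if K = K' then 1 else 0) + sgn (real k - real k') + sgn (real K - real K')
     - (if K = k' then 1 else 0) - sgn (real K - real k') + (if k = K' then 1 else 0) - sgn (real k - real K')"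

lemma master:
  assumes kN: "k < N" and kN': "k' < N" and i1: "1 \<le> i" and im: "i \<le> m" and j1: "1 \<le> j" and jm: "j \<le> m"
    and al: "\<alpha> \<noteq> 0"
  shows "rtbr N m \<alpha> d c (Cc i k) (Cc j k') =
    (lpair N (Ppos (lmul N (Umat N m \<alpha> c) (Fm N i k))) (lmul N (Umat N m \<alpha> c) (Fm N j k'))
     - lpair N (Ppos (lmul N (Fm N i k) (Umat N m \<alpha> c))) (lmul N (Fm N j k') (Umat N m \<alpha> c))) / \<alpha>
    + \<alpha> / 2 * c i k * c j k' * Qf k k' ((k + i) mod N) ((k' + j) mod N)"
proof -
  let ?Y = "Ym N m \<alpha> c" and ?G = "G2C N m \<alpha> c i k" and ?H = "G2C N m \<alpha> c j k'"
  let ?X1 = "lmul N ?G ?Y" and ?X2 = "lmul N ?Y ?G" and ?Z1 = "lmul N ?H ?Y" and ?Z2 = "lmul N ?Y ?H"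
  let ?SP1 = "lpair N (Ppos (lmul N (Umat N m \<alpha> c) (Fm N i k))) (lmul N (Umat N m \<alpha> c) (Fm N j k'))"
  let ?SP2 = "lpair N (Ppos (lmul N (Fm N i k) (Umat N m \<alpha> c))) (lmul N (Fm N j k') (Umat N m \<alpha> c))"
  let ?FN = "lpair N (Fm N i k) (Pneg (MM N m \<alpha> c j k'))"
  let ?K = "(k + i) mod N" and ?K' = "(k' + j) mod N"
  have KN: "?K < N" and KN': "?K' < N" using kN by auto
  define B where "B = int i + int j"
  have B0: "0 \<le> B" unfolding B_def by simp
  have v: "vb B ?X1" "vb B ?X2" "vb B ?Z1" "vb B ?Z2"
    unfolding B_def by (auto intro: vbm[OF vb_GY] vbm[OF vb_YG])
  have s1: "?X1 0 = (\<lambda>a b. if a = k \<and> b = k then - c i k else 0)" by (rule GY0[OF kN i1 im al])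
  have s2: "?X2 0 = (\<lambda>a b. if a = ?K \<and> b = ?K then - c i k else 0)" by (rule YG0[OF kN i1 im al])
  have s3: "?Z1 0 = (\<lambda>a b. if a = k' \<and> b = k' then - c j k' else 0)" by (rule GY0[OF kN' j1 jm al])
  have s4: "?Z2 0 = (\<lambda>a b. if a = ?K' \<and> b = ?K' then - c j k' else 0)" by (rule YG0[OF kN' j1 jm al])
  have "rtbr N m \<alpha> d c (Cc i k) (Cc j k') = \<alpha> * pb2 N (Lmat N \<alpha> d, ?Y) (lz, ?G) (lz, ?H)"
    unfolding rtbr_eq grad_C'[OF kN al] grad_C'[OF kN' al] ..
  also have "\<dots> = \<alpha> * (1/2) * ((lpair N (R0 ?X1) ?Z1 + w0 N ?X1 ?Z1) - (lpair N (R0 ?X2) ?Z2 - w0 N ?X2 ?Z2)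
       + (- (p0 N ?X2 ?Z1 + w0 N ?X2 ?Z1)) - (- (p0 N ?X1 ?Z2 - w0 N ?X1 ?Z2)))"
    unfolding pb2_22 fst_conv snd_conv
    by (simp add: lpair_Aone[OF v(1) v(3)] lpair_Atwo[OF v(2) v(4)] lpair_Sop lpair_Sst lpair_lneg)
  also have "lpair N (R0 ?X1) ?Z1 = 2 * lpair N (Ppos ?X1) ?Z1 + p0 N ?X1 ?Z1 - lpair N ?X1 ?Z1"
    by (rule R0_split[OF v(1) v(3) B0])
  also have "lpair N (R0 ?X2) ?Z2 = 2 * lpair N (Ppos ?X2) ?Z2 + p0 N ?X2 ?Z2 - lpair N ?X2 ?Z2"
    by (rule R0_split[OF v(2) v(4) B0])
  also have "lpair N ?X1 ?Z1 = lpair N ?X2 ?Z2"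
    by (rule pair_sym_GY[where B=B]) (auto simp: B_def)
  also have "lpair N (Ppos ?X1) ?Z1 = (1/\<alpha>) * ((1/\<alpha>) * (?SP1 - ?FN))" by (rule lemB[OF kN kN'])
  also have "lpair N (Ppos ?X2) ?Z2 = (1/\<alpha>) * ((1/\<alpha>) * (?SP2 - ?FN))" by (rule lemC[OF kN kN'])
  also have "p0 N ?X1 ?Z1 = (if k = k' then c i k * c j k' else 0)" by (simp add: p0_dd[where X="?X1" and Z="?Z1", OF kN kN' s1 s3])
  also have "p0 N ?X2 ?Z2 = (if ?K = ?K' then c i k * c j k' else 0)" by (simp add: p0_dd[where X="?X2" and Z="?Z2", OF KN KN' s2 s4])
  also have "p0 N ?X2 ?Z1 = (if ?K = k' then c i k * c j k' else 0)" by (simp add: p0_dd[where X="?X2" and Z="?Z1", OF KN kN' s2 s3])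
  also have "p0 N ?X1 ?Z2 = (if k = ?K' then c i k * c j k' else 0)" by (simp add: p0_dd[where X="?X1" and Z="?Z2", OF kN KN' s1 s4])
  also have "w0 N ?X1 ?Z1 = sgn (real k - real k') * c i k * c j k'" by (simp add: w0_dd[where X="?X1" and Z="?Z1", OF kN kN' s1 s3])
  also have "w0 N ?X2 ?Z2 = sgn (real ?K - real ?K') * c i k * c j k'" by (simp add: w0_dd[where X="?X2" and Z="?Z2", OF KN KN' s2 s4])
  also have "w0 N ?X2 ?Z1 = sgn (real ?K - real k') * c i k * c j k'" by (simp add: w0_dd[where X="?X2" and Z="?Z1", OF KN kN' s2 s3])
  also have "w0 N ?X1 ?Z2 = sgn (real k - real ?K') * c i k * c j k'" by (simp add: w0_dd[where X="?X1" and Z="?Z2", OF kN KN' s1 s4])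
  finally have r: "rtbr N m \<alpha> d c (Cc i k) (Cc j k') = \<alpha> * (1 / 2) *
    (2 * (1 / \<alpha> * (1 / \<alpha> * (?SP1 - ?FN))) + (if k = k' then c i k * c j k' else 0) - lpair N ?X2 ?Z2 +
     sgn (real k - real k') * c i k * c j k' -
     (2 * (1 / \<alpha> * (1 / \<alpha> * (?SP2 - ?FN))) + (if ?K = ?K' then c i k * c j k' else 0) - lpair N ?X2 ?Z2 -
      sgn (real ?K - real ?K') * c i k * c j k') +
     - ((if ?K = k' then c i k * c j k' else 0) + sgn (real ?K - real k') * c i k * c j k') -
     - ((if k = ?K' then c i k * c j k' else 0) - sgn (real k - real ?K') * c i k * c j k'))" .
  show ?thesis unfolding r Qf_def using al by (simp add: field_simps)
qed


lemma sum_single: "finite A \<Longrightarrow> q0 \<in> A \<Longrightarrow> (\<And>q. q \<in> A \<Longrightarrow> q \<noteq> q0 \<Longrightarrow> f q = (0::real)) \<Longrightarrow> sum f A = f q0"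
  by (simp add: sum.remove sum.neutral)

lemma Un0: "Umat N m \<alpha> c (- int 0) a b = (if a = b \<and> a < N then 1 else 0)"
  unfolding Umat_def lone_def by auto
lemma Un: "1 \<le> r \<Longrightarrow> Umat N m \<alpha> c (- int r) a b = (if a < N \<and> b < N \<and> r \<le> m \<and> b = (a + r) mod N then - \<alpha> * c r a else 0)"
  unfolding Umat_def lone_def by auto

lemma modif: "(a::nat) < N \<Longrightarrow> t < N \<Longrightarrow> (a + t) mod N = (if a + t < N then a + t else a + t - N)"
proof -
  assume "a < N" "t < N"
  then show ?thesis
  proof (cases "a + t < N")
    case False
    then have "(a + t) mod N = (a + t - N) mod N" by (simp add: le_mod_geq)
    also have "\<dots> = a + t - N" using \<open>a < N\<close> \<open>t < N\<close> by simp
    finally show ?thesis using False by simp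
  qed simp
qed

lemma SP1_sum:
  assumes kN: "k < N" and kN': "k' < N"
  shows "lpair N (Ppos (lmul N (Umat N m \<alpha> c) (Fm N i k))) (lmul N (Umat N m \<alpha> c) (Fm N j k'))
    = (\<Sum>q\<in>{1..i}. Umat N m \<alpha> c (- int (i - q)) k' ((k + i) mod N) * Umat N m \<alpha> c (- int (q + j)) k ((k' + j) mod N))"
proof -
  let ?U = "Umat N m \<alpha> c" and ?K = "(k + i) mod N" and ?K' = "(k' + j) mod N"
  let ?f = "\<lambda>p. if 0 < p then ?U (p - int i) k' ?K * ?U (- p - int j) k ?K' else 0"
  have "lpair N (Ppos (lmul N ?U (Fm N i k))) (lmul N ?U (Fm N j k')) = (\<Sum>a<N. \<Sum>b<N. if a = k' \<and> b = k then Sum_any ?f else 0)"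
    unfolding lpair_SA
  proof (intro sum.cong refl)
    fix a b
    have e: "(\<lambda>p. Ppos (lmul N ?U (Fm N i k)) p a b * lmul N ?U (Fm N j k') (- p) b a) = (if a = k' \<and> b = k then ?f else (\<lambda>p. 0))"
      by (intro ext) (simp only: Ppos_def UF_eq[OF kN] UF_eq[OF kN'], auto simp: algebra_simps)
    then show "Sum_any (\<lambda>p. Ppos (lmul N ?U (Fm N i k)) p a b * lmul N ?U (Fm N j k') (- p) b a) = (if a = k' \<and> b = k then Sum_any ?f else 0)"
      unfolding e by (cases "a = k' \<and> b = k") auto
  qed
  also have "\<dots> = Sum_any ?f" by (rule sum2_delta[OF kN' kN])
  also have "\<dots> = (\<Sum>p\<in>{1..int i}. ?f p)"
  proof (rule SA_win)
    fix p assume "p \<notin> {1..int i}"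
    then show "?f p = 0" using vb_U[of N m \<alpha> c] unfolding vb_def by force
  qed simp
  also have "\<dots> = (\<Sum>q\<in>{1..i}. ?f (int q))"
  proof -
    have "{1..int i} = int ` {1..i}" by (simp add: image_int_atLeastAtMost)
    then show ?thesis by (simp add: sum.reindex)
  qed
  also have "\<dots> = (\<Sum>q\<in>{1..i}. ?U (- int (i - q)) k' ?K * ?U (- int (q + j)) k ?K')"
    by (intro sum.cong refl) (auto simp: of_nat_diff)
  finally show ?thesis .
qed

lemma SP2_sum:
  assumes kN: "k < N" and kN': "k' < N"
  shows "lpair N (Ppos (lmul N (Fm N i k) (Umat N m \<alpha> c))) (lmul N (Fm N j k') (Umat N m \<alpha> c))
    = (\<Sum>q\<in>{1..i}. Umat N m \<alpha> c (- int (i - q)) k ((k' + j) mod N) * Umat N m \<alpha> c (- int (q + j)) k' ((k + i) mod N))"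
proof -
  let ?U = "Umat N m \<alpha> c" and ?K = "(k + i) mod N" and ?K' = "(k' + j) mod N"
  let ?f = "\<lambda>p. if 0 < p then ?U (p - int i) k ?K' * ?U (- p - int j) k' ?K else 0"
  have "lpair N (Ppos (lmul N (Fm N i k) ?U)) (lmul N (Fm N j k') ?U) = (\<Sum>a<N. \<Sum>b<N. if a = ?K \<and> b = ?K' then Sum_any ?f else 0)"
    unfolding lpair_SA
  proof (intro sum.cong refl)
    fix a b
    have e: "(\<lambda>p. Ppos (lmul N (Fm N i k) ?U) p a b * lmul N (Fm N j k') ?U (- p) b a) = (if a = ?K \<and> b = ?K' then ?f else (\<lambda>p. 0))"
      by (intro ext) (simp only: Ppos_def FU_eq[OF kN] FU_eq[OF kN'], auto simp: algebra_simps)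
    then show "Sum_any (\<lambda>p. Ppos (lmul N (Fm N i k) ?U) p a b * lmul N (Fm N j k') ?U (- p) b a) = (if a = ?K \<and> b = ?K' then Sum_any ?f else 0)"
      unfolding e by (cases "a = ?K \<and> b = ?K'") auto
  qed
  also have "\<dots> = Sum_any ?f" by (rule sum2_delta) (use kN in auto)
  also have "\<dots> = (\<Sum>p\<in>{1..int i}. ?f p)"
  proof (rule SA_win)
    fix p assume "p \<notin> {1..int i}"
    then show "?f p = 0" using vb_U[of N m \<alpha> c] unfolding vb_def by force
  qed simp
  also have "\<dots> = (\<Sum>q\<in>{1..i}. ?f (int q))"
  proof -
    have "{1..int i} = int ` {1..i}" by (simp add: image_int_atLeastAtMost)
    then show ?thesis by (simp add: sum.reindex)
  qed
  also have "\<dots> = (\<Sum>q\<in>{1..i}. ?U (- int (i - q)) k ?K' * ?U (- int (q + j)) k' ?K)"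
    by (intro sum.cong refl) (auto simp: of_nat_diff)
  finally show ?thesis .
qed


definition PP :: "nat \<Rightarrow> nat \<Rightarrow> nat \<Rightarrow> nat" where "PP N k t = (k + t) mod N"

lemma PP_if: "k < N \<Longrightarrow> t < N \<Longrightarrow> PP N k t = (if k + t < N then k + t else k + t - N)"
  unfolding PP_def by (rule modif)

lemma sg_off:
  assumes "k < N" "t1 < t2" "t2 < N"
  shows "sgn (real (PP N k t1) - real (PP N k t2)) = (if k + t1 < N \<and> N \<le> k + t2 then 1 else -1)"
  using assms PP_if[of k N t1] PP_if[of k N t2] by (auto simp: sgn_if)

lemma sg_off':
  assumes "k < N" "t1 < t2" "t2 < N"
  shows "sgn (real (PP N k t2) - real (PP N k t1)) = (if k + t1 < N \<and> N \<le> k + t2 then -1 else 1)"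
  using assms PP_if[of k N t1] PP_if[of k N t2] by (auto simp: sgn_if)

lemma eq_off:
  assumes "k < N" "t1 < N" "t2 < N"
  shows "PP N k t1 = PP N k t2 \<longleftrightarrow> t1 = t2"
  using assms PP_if[of k N t1] PP_if[of k N t2] by auto

lemma PP0: "k < N \<Longrightarrow> PP N k 0 = k" unfolding PP_def by simp
lemma PP_add: "(PP N k t + j) mod N = PP N k (t + j)" unfolding PP_def by (simp add: mod_add_left_eq add.assoc)
lemma PP_lt: "0 < N \<Longrightarrow> PP N k t < N" unfolding PP_def by simp

lemma QA:
  fixes N k i j :: nat
  assumes kN: "k < N" and i1: "1 \<le> i" and j1: "1 \<le> j" and ij: "i + j < N"
  shows "Qf (PP N k 0) (PP N k i) (PP N k i) (PP N k (i + j)) = -2"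
  unfolding Qf_def using assms
  by (simp add: eq_off sg_off sg_off' del: PP0)


lemma UnP:
  assumes "1 \<le> r" "k < N" "t1 + r < N" "t2 < N"
  shows "Umat N m \<alpha> c (- int r) (PP N k t1) (PP N k t2) = (if r \<le> m \<and> t2 = t1 + r then - \<alpha> * c r (PP N k t1) else 0)"
proof -
  have "PP N k t1 < N" "PP N k t2 < N" using assms PP_lt by auto
  moreover have "(PP N k t1 + r) mod N = PP N k (t1 + r)" by (rule PP_add)
  ultimately show ?thesis using Un[OF assms(1)] eq_off[of k N t2 "t1 + r"] assms by auto
qed

lemma Un0P:
  assumes "k < N" "t1 < N" "t2 < N"
  shows "Umat N m \<alpha> c (- int 0) (PP N k t1) (PP N k t2) = (if t1 = t2 then 1 else 0)"
  using Un0 eq_off[OF assms] PP_lt[of N k] assms by auto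


lemma PP_cancel: "PP N k t1 = PP N k t2 \<Longrightarrow> t1 mod N = t2 mod N"
proof -
  assume h: "PP N k t1 = PP N k t2"
  have "(int k + int t1) mod int N = (int k + int t2) mod int N" using h unfolding PP_def by (metis of_nat_add zmod_int)
  then have "((int k + int t1) - int k) mod int N = ((int k + int t2) - int k) mod int N" by (rule mod_diff_cong) simp
  then have "int (t1 mod N) = int (t2 mod N)" by (simp add: zmod_int)
  then show ?thesis by simp
qed

lemma mod2N: "(t::nat) < 2 * N \<Longrightarrow> t mod N = (if t < N then t else t - N)"
  by (simp add: le_mod_geq)

lemma Un_nz: "1 \<le> r \<Longrightarrow> Umat N m \<alpha> c (- int r) a b \<noteq> 0 \<Longrightarrow> r \<le> m \<and> b = (a + r) mod N \<and> a < N"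
  using Un[of r N m \<alpha> c a b] by (auto split: if_splits)

lemma Un_val: "1 \<le> r \<Longrightarrow> r \<le> m \<Longrightarrow> a < N \<Longrightarrow> Umat N m \<alpha> c (- int r) a ((a + r) mod N) = - \<alpha> * c r a"
  using Un[of r N m \<alpha> c a "(a + r) mod N"] by auto

definition ut :: "real \<Rightarrow> (nat \<Rightarrow> nat \<Rightarrow> real) \<Rightarrow> nat \<Rightarrow> nat \<Rightarrow> real" where
  "ut \<alpha> c r a = (if r = 0 then 1 else - \<alpha> * c r a)"

lemma Un_ut: "r \<le> m \<Longrightarrow> a < N \<Longrightarrow> Umat N m \<alpha> c (- int r) a ((a + r) mod N) = ut \<alpha> c r a"
  unfolding ut_def using Un_val[of r m a N \<alpha> c] Un0[of N m \<alpha> c a] by auto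

lemma SP1_expl:
  assumes kN: "k < N" and sN: "s < N" and i1: "1 \<le> i" and im: "i \<le> m" and j1: "1 \<le> j" and jm: "j \<le> m" and mN: "2 * m + 2 \<le> N"
  shows "lpair N (Ppos (lmul N (Umat N m \<alpha> c) (Fm N i k))) (lmul N (Umat N m \<alpha> c) (Fm N j (PP N k s)))
    = (if 1 \<le> s \<and> s \<le> i then ut \<alpha> c (i - s) (PP N k s) * (if s + j \<le> m then - \<alpha> * c (s + j) k else 0) else 0)"
proof -
  let ?U = "Umat N m \<alpha> c" and ?k' = "PP N k s"
  have k'N: "?k' < N" using PP_lt kN by auto
  have KK: "(k + i) mod N = (?k' + (i - q)) mod N" if "q \<le> i" "q = s" for q
  proof -
    have "((k + s) mod N + (i - s)) mod N = (k + s + (i - s)) mod N" by (rule mod_add_left_eq)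
    then show ?thesis using that unfolding PP_def by simp
  qed
  have KK': "(?k' + j) mod N = (k + (q + j)) mod N" if "q = s" for q
    using that unfolding PP_def by (simp add: mod_add_left_eq add.assoc)
  have z: "?U (- int (q + j)) k ((?k' + j) mod N) = 0" if "q \<noteq> s" "1 \<le> q" "q \<le> i" for q
  proof (rule ccontr)
    assume "?U (- int (q + j)) k ((?k' + j) mod N) \<noteq> 0"
    then have "q + j \<le> m" and e: "(?k' + j) mod N = (k + (q + j)) mod N" using Un_nz[of "q + j" N m \<alpha> c k "(?k' + j) mod N"] j1 by auto
    have "PP N k (s + j) = PP N k (q + j)" using e unfolding PP_def by (simp add: mod_add_left_eq add.assoc)
    then have "(s + j) mod N = (q + j) mod N" by (rule PP_cancel)
    then show False using mod2N[of "s + j" N] \<open>q + j \<le> m\<close> sN jm mN that by (auto split: if_splits)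
  qed
  show ?thesis unfolding SP1_sum[OF kN k'N]
  proof (cases "1 \<le> s \<and> s \<le> i")
    case True
    have "(\<Sum>q\<in>{1..i}. ?U (- int (i - q)) ?k' ((k + i) mod N) * ?U (- int (q + j)) k ((?k' + j) mod N))
        = ?U (- int (i - s)) ?k' ((k + i) mod N) * ?U (- int (s + j)) k ((?k' + j) mod N)"
      by (rule sum_single) (use True z in auto)
    also have "?U (- int (i - s)) ?k' ((k + i) mod N) = ut \<alpha> c (i - s) ?k'"
      using KK[of s] True Un_ut[of "i - s" m ?k' N \<alpha> c] k'N im by simp
    also have "?U (- int (s + j)) k ((?k' + j) mod N) = (if s + j \<le> m then - \<alpha> * c (s + j) k else 0)"
      using KK'[of s] Un_val[of "s + j" m k N \<alpha> c] Un[of "s + j" N m \<alpha> c k "(k + (s + j)) mod N"] kN j1 by auto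
    finally show "(\<Sum>q\<in>{1..i}. ?U (- int (i - q)) ?k' ((k + i) mod N) * ?U (- int (q + j)) k ((?k' + j) mod N))
        = (if 1 \<le> s \<and> s \<le> i then ut \<alpha> c (i - s) ?k' * (if s + j \<le> m then - \<alpha> * c (s + j) k else 0) else 0)"
      using True by simp
  next
    case False
    then show "(\<Sum>q\<in>{1..i}. ?U (- int (i - q)) ?k' ((k + i) mod N) * ?U (- int (q + j)) k ((?k' + j) mod N))
        = (if 1 \<le> s \<and> s \<le> i then ut \<alpha> c (i - s) ?k' * (if s + j \<le> m then - \<alpha> * c (s + j) k else 0) else 0)"
      using z by (intro trans[OF sum.neutral]) auto
  qed
qed


lemma SP2_expl:
  assumes kN: "k < N" and sN: "s < N" and i1: "1 \<le> i" and im: "i \<le> m" and j1: "1 \<le> j" and jm: "j \<le> m" and mN: "2 * m + 2 \<le> N"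
  and q0: "q0 = (if s + j < i then i - j - s else i + N - s - j)"
  shows "lpair N (Ppos (lmul N (Fm N i k) (Umat N m \<alpha> c))) (lmul N (Fm N j (PP N k s)) (Umat N m \<alpha> c))
    = (if 1 \<le> q0 \<and> q0 \<le> i then ut \<alpha> c (i - q0) k * (if q0 + j \<le> m then - \<alpha> * c (q0 + j) (PP N k s) else 0) else 0)"
proof -
  let ?U = "Umat N m \<alpha> c" and ?k' = "PP N k s"
  have k'N: "?k' < N" using PP_lt kN by auto
  have z: "?U (- int (q + j)) ?k' ((k + i) mod N) = 0" if "q \<noteq> q0" "1 \<le> q" "q \<le> i" for q
  proof (rule ccontr)
    assume "?U (- int (q + j)) ?k' ((k + i) mod N) \<noteq> 0"
    then have qj: "q + j \<le> m" and e: "(k + i) mod N = (?k' + (q + j)) mod N"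
      using Un_nz[of "q + j" N m \<alpha> c ?k' "(k + i) mod N"] j1 by auto
    have "PP N k i = PP N k (s + (q + j))" using e unfolding PP_def by (simp add: mod_add_left_eq add.assoc)
    then have "i mod N = (s + (q + j)) mod N" by (rule PP_cancel)
    then show False using mod2N[of "s + (q + j)" N] qj sN im mN that q0 by (auto split: if_splits)
  qed
  show ?thesis unfolding SP2_sum[OF kN k'N]
  proof (cases "1 \<le> q0 \<and> q0 \<le> i")
    case True
    have s1: "(\<Sum>q\<in>{1..i}. ?U (- int (i - q)) k ((?k' + j) mod N) * ?U (- int (q + j)) ?k' ((k + i) mod N))
        = ?U (- int (i - q0)) k ((?k' + j) mod N) * ?U (- int (q0 + j)) ?k' ((k + i) mod N)"
      by (rule sum_single) (use True z in auto)
    moreover have e1: "(?k' + j) mod N = (k + (i - q0)) mod N"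
    proof -
      have "(?k' + j) mod N = (k + (s + j)) mod N" unfolding PP_def by (simp add: mod_add_left_eq add.assoc)
      also have "\<dots> = (k + (i - q0)) mod N"
      proof (cases "s + j < i")
        case True then show ?thesis using q0 by (simp add: add.commute)
      next
        case False
        then have "s + j = (i - q0) + N" using q0 \<open>1 \<le> q0 \<and> q0 \<le> i\<close> sN by auto
        then show ?thesis by (simp add: add.assoc[symmetric])
      qed
      finally show ?thesis .
    qed
    moreover have v1: "?U (- int (i - q0)) k ((k + (i - q0)) mod N) = ut \<alpha> c (i - q0) k"
      using Un_ut[of "i - q0" m k N \<alpha> c] kN im by simp
    moreover have e2: "(k + i) mod N = (?k' + (q0 + j)) mod N"
    proof -
      have "(?k' + (q0 + j)) mod N = (k + (s + (q0 + j))) mod N" unfolding PP_def by (simp add: mod_add_left_eq add.assoc)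
      also have "\<dots> = (k + i) mod N"
      proof (cases "s + j < i")
        case True then show ?thesis using q0 by simp
      next
        case False
        then have "s + (q0 + j) = i + N" using q0 \<open>1 \<le> q0 \<and> q0 \<le> i\<close> sN by auto
        then show ?thesis by (simp add: add.assoc[symmetric])
      qed
      finally show ?thesis by simp
    qed
    moreover have v2: "?U (- int (q0 + j)) ?k' ((?k' + (q0 + j)) mod N) = (if q0 + j \<le> m then - \<alpha> * c (q0 + j) ?k' else 0)"
      using Un_val[of "q0 + j" m ?k' N \<alpha> c] Un[of "q0 + j" N m \<alpha> c ?k' "(?k' + (q0 + j)) mod N"] k'N j1 by auto
    show "(\<Sum>q\<in>{1..i}. ?U (- int (i - q)) k ((?k' + j) mod N) * ?U (- int (q + j)) ?k' ((k + i) mod N))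
        = (if 1 \<le> q0 \<and> q0 \<le> i then ut \<alpha> c (i - q0) k * (if q0 + j \<le> m then - \<alpha> * c (q0 + j) ?k' else 0) else 0)"
      by (subst s1, subst e1, subst v1, subst e2, subst v2) (use True in simp)
  next
    case False
    then show "(\<Sum>q\<in>{1..i}. ?U (- int (i - q)) k ((?k' + j) mod N) * ?U (- int (q + j)) ?k' ((k + i) mod N))
        = (if 1 \<le> q0 \<and> q0 \<le> i then ut \<alpha> c (i - q0) k * (if q0 + j \<le> m then - \<alpha> * c (q0 + j) ?k' else 0) else 0)"
      using z by (intro trans[OF sum.neutral]) auto
  qed
qed


lemma Qgen:
  fixes N k :: nat
  assumes "k < N" "t0 < N" "t1 < N" "t2 < N" "t3 < N"
  shows "Qf (PP N k t0) (PP N k t1) (PP N k t2) (PP N k t3) =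
    (if t0 = t1 then 1 else 0) - (if t2 = t3 then 1 else 0) + sgn (real (PP N k t0) - real (PP N k t1))
     + sgn (real (PP N k t2) - real (PP N k t3)) - (if t2 = t1 then 1 else 0) - sgn (real (PP N k t2) - real (PP N k t1))
     + (if t0 = t3 then 1 else 0) - sgn (real (PP N k t0) - real (PP N k t3))"
  unfolding Qf_def using assms by (simp add: eq_off)

lemma sgP: "k < N \<Longrightarrow> t1 < N \<Longrightarrow> t2 < N \<Longrightarrow> sgn (real (PP N k t1) - real (PP N k t2)) =
   (if t1 = t2 then 0 else if t1 < t2 then (if k + t1 < N \<and> N \<le> k + t2 then 1 else -1)
    else (if k + t2 < N \<and> N \<le> k + t1 then -1 else 1))"
  using sg_off[of k N t1 t2] sg_off'[of k N t2 t1] by (cases "t1 < t2"; cases "t1 = t2") auto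

lemma master_off:
  assumes kN: "k < N" and sN: "s < N" and i1: "1 \<le> i" and im: "i \<le> m" and j1: "1 \<le> j" and jm: "j \<le> m"
    and mN: "2 * m + 2 \<le> N" and al: "\<alpha> \<noteq> 0"
    and q0: "q0 = (if s + j < i then i - j - s else i + N - s - j)"
  shows "rtbr N m \<alpha> d c (Cc i k) (Cc j (PP N k s)) =
    ((if 1 \<le> s \<and> s \<le> i then ut \<alpha> c (i - s) (PP N k s) * (if s + j \<le> m then - \<alpha> * c (s + j) k else 0) else 0)
     - (if 1 \<le> q0 \<and> q0 \<le> i then ut \<alpha> c (i - q0) k * (if q0 + j \<le> m then - \<alpha> * c (q0 + j) (PP N k s) else 0) else 0)) / \<alpha>
    + \<alpha> / 2 * c i k * c j (PP N k s) * Qf k (PP N k s) (PP N k i) (PP N k (s + j))"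
proof -
  have k'N: "PP N k s < N" using PP_lt kN by auto
  have e: "(PP N k s + j) mod N = PP N k (s + j)" by (rule PP_add)
  show ?thesis
    using master[OF kN k'N i1 im j1 jm al, of d] SP1_expl[OF kN sN i1 im j1 jm mN, of \<alpha> c]
      SP2_expl[OF kN sN i1 im j1 jm mN q0, of \<alpha> c] e
    by (simp add: PP_def[symmetric])
qed

lemma cvE: "1 \<le> p \<Longrightarrow> p \<le> m \<Longrightarrow> cv m c p k = c p k" unfolding cv_def by simp

lemma clauseA:
  assumes kN: "k < N" and i1: "1 \<le> i" and im: "i \<le> m" and j1: "1 \<le> j" and jm: "j \<le> m"
    and mN: "2 * m + 2 \<le> N" and al: "\<alpha> \<noteq> 0"
  shows "rtbr N m \<alpha> d c (Cc i k) (Cc j ((k + i) mod N)) = - cv m c (i + j) k - \<alpha> * c i k * c j ((k + i) mod N)"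
proof -
  have iN: "i < N" using im mN by auto
  have Q: "Qf k (PP N k i) (PP N k i) (PP N k (i + j)) = -2"
    using QA[OF kN i1 j1, of] im jm mN PP0[OF kN] by simp
  have r: "rtbr N m \<alpha> d c (Cc i k) (Cc j (PP N k i)) =
    ((ut \<alpha> c 0 (PP N k i) * (if i + j \<le> m then - \<alpha> * c (i + j) k else 0)) - 0) / \<alpha>
    + \<alpha> / 2 * c i k * c j (PP N k i) * (-2)"
    using master_off[OF kN iN i1 im j1 jm mN al refl, of d] Q i1 im jm mN by simp
  show ?thesis unfolding r[unfolded PP_def] using al i1 unfolding ut_def cv_def
    by (cases "i + j \<le> m") (simp_all add: field_simps)
qed

lemma QB:
  fixes N k :: nat
  assumes "k < N" "0 < l" "l < i" "i < l + j" "l + j < N"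
  shows "Qf k (PP N k l) (PP N k i) (PP N k (l + j)) = -2"
proof -
  have "Qf (PP N k 0) (PP N k l) (PP N k i) (PP N k (l + j)) = -2"
    using Qgen[of k N 0 l i "l + j"] assms by (auto simp: sgP)
  then show ?thesis using PP0[OF assms(1)] by simp
qed

lemma clauseB:
  assumes kN: "k < N" and i1: "1 \<le> i" and ij: "i \<le> j" and jm: "j \<le> m" and l1: "1 \<le> l" and li: "l \<le> i - 1"
    and mN: "2 * m + 2 \<le> N" and al: "\<alpha> \<noteq> 0"
  shows "rtbr N m \<alpha> d c (Cc i k) (Cc j ((k + l) mod N)) =
     - \<alpha> * c i k * c j ((k + l) mod N) + \<alpha> * cv m c (j + l) k * cv m c (i - l) ((k + l) mod N)"
proof -
  have lN: "l < N" and im: "i \<le> m" and j1: "1 \<le> j" using li ij jm mN i1 by auto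
  have Q: "Qf k (PP N k l) (PP N k i) (PP N k (l + j)) = -2"
    by (rule QB) (use kN l1 li ij jm mN in auto)
  have q0: "i + N - l - j = (if l + j < i then i - j - l else i + N - l - j)" using ij by auto
  have c1: "1 \<le> l \<and> l \<le> i" "\<not> (1 \<le> i + N - l - j \<and> i + N - l - j \<le> i)" using l1 li jm mN ij by auto
  have r: "rtbr N m \<alpha> d c (Cc i k) (Cc j (PP N k l)) =
    ((ut \<alpha> c (i - l) (PP N k l) * (if l + j \<le> m then - \<alpha> * c (l + j) k else 0)) - 0) / \<alpha>
    + \<alpha> / 2 * c i k * c j (PP N k l) * (-2)"
    using master_off[OF kN lN i1 im j1 jm mN al q0, of d] Q c1 by (simp only: if_True if_False simp_thms)
  have f: "1 \<le> i - l" "i - l \<le> m" "i - l \<noteq> 0" using l1 li im by auto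
  have cv1: "cv m c (i - l) ((k + l) mod N) = c (i - l) ((k + l) mod N)" by (rule cvE) (use f in auto)
  have cv2: "cv m c (j + l) k = (if l + j \<le> m then c (l + j) k else 0)" using l1 unfolding cv_def by (auto simp: add.commute)
  show ?thesis unfolding r[unfolded PP_def] cv1 cv2 using al f unfolding ut_def
    by (cases "l + j \<le> m") (simp_all add: field_simps)
qed

lemma clauseC:
  assumes kN: "k < N" and i1: "1 \<le> i" and ij: "i \<le> j" and jm: "j \<le> m" and l1: "j - i + 1 \<le> l" and li: "l \<le> j - 1"
    and mN: "2 * m + 2 \<le> N" and al: "\<alpha> \<noteq> 0"
  shows "rtbr N m \<alpha> d c (Cc j k) (Cc i ((k + l) mod N)) =
     - \<alpha> * c j k * c i ((k + l) mod N) + \<alpha> * cv m c (i + l) k * cv m c (j - l) ((k + l) mod N)"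
proof -
  have lN: "l < N" and im: "i \<le> m" and j1: "1 \<le> j" using li ij jm mN i1 by auto
  have Q: "Qf k (PP N k l) (PP N k j) (PP N k (l + i)) = -2"
    by (rule QB) (use kN l1 li ij jm mN in auto)
  have q0: "j + N - l - i = (if l + i < j then j - i - l else j + N - l - i)" using l1 by auto
  have c1: "1 \<le> l \<and> l \<le> j" "\<not> (1 \<le> j + N - l - i \<and> j + N - l - i \<le> j)" using l1 li jm mN ij by auto
  have r: "rtbr N m \<alpha> d c (Cc j k) (Cc i (PP N k l)) =
    ((ut \<alpha> c (j - l) (PP N k l) * (if l + i \<le> m then - \<alpha> * c (l + i) k else 0)) - 0) / \<alpha>
    + \<alpha> / 2 * c j k * c i (PP N k l) * (-2)"
    using master_off[OF kN lN j1 jm i1 im mN al q0, of d] Q c1 by (simp only: if_True if_False simp_thms)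
  have f: "1 \<le> j - l" "j - l \<le> m" "j - l \<noteq> 0" using l1 li jm by auto
  have cv1: "cv m c (j - l) ((k + l) mod N) = c (j - l) ((k + l) mod N)" by (rule cvE) (use f in auto)
  have cv2: "cv m c (i + l) k = (if l + i \<le> m then c (l + i) k else 0)" using i1 unfolding cv_def by (auto simp: add.commute)
  show ?thesis unfolding r[unfolded PP_def] cv1 cv2 using al f unfolding ut_def
    by (cases "l + i \<le> m") (simp_all add: field_simps)
qed


lemma Qoff:
  fixes N k :: nat
  assumes "k < N" "t1 < N" "t2 < N" "t3 < N"
  shows "Qf k (PP N k t1) (PP N k t2) (PP N k t3) =
    (if 0 = t1 then 1 else 0) - (if t2 = t3 then 1 else 0) + sgn (real (PP N k 0) - real (PP N k t1))
     + sgn (real (PP N k t2) - real (PP N k t3)) - (if t2 = t1 then 1 else 0) - sgn (real (PP N k t2) - real (PP N k t1))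
     + (if 0 = t3 then 1 else 0) - sgn (real (PP N k 0) - real (PP N k t3))"
  using Qgen[of k N 0 t1 t2 t3] assms PP0[of k N] by simp

lemma QZ0a: "k < N \<Longrightarrow> 0 < j \<Longrightarrow> j < i \<Longrightarrow> i < N \<Longrightarrow> Qf k (PP N k 0) (PP N k i) (PP N k j) = 2"
  by (subst Qoff) (auto simp: sgP)
lemma QZ0b: "k < N \<Longrightarrow> 0 < i \<Longrightarrow> i \<le> j \<Longrightarrow> j < N \<Longrightarrow> Qf k (PP N k 0) (PP N k i) (PP N k j) = 0"
  by (subst Qoff) (auto simp: sgP)
lemma QZ1a: "k < N \<Longrightarrow> 0 < s \<Longrightarrow> 0 < j \<Longrightarrow> s + j < i \<Longrightarrow> i < N \<Longrightarrow> Qf k (PP N k s) (PP N k i) (PP N k (s + j)) = 0"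
  by (subst Qoff) (auto simp: sgP)
lemma QZ1b: "k < N \<Longrightarrow> 0 < s \<Longrightarrow> s < i \<Longrightarrow> i < N \<Longrightarrow> Qf k (PP N k s) (PP N k i) (PP N k i) = -2"
  by (subst Qoff) (auto simp: sgP)
lemma QZ2: "k < N \<Longrightarrow> 0 < i \<Longrightarrow> i < s \<Longrightarrow> 0 < j \<Longrightarrow> s + j < N \<Longrightarrow> Qf k (PP N k s) (PP N k i) (PP N k (s + j)) = 0"
  by (subst Qoff) (auto simp: sgP)
lemma QZ3: "k < N \<Longrightarrow> 0 < i \<Longrightarrow> i \<le> u \<Longrightarrow> u < s \<Longrightarrow> s < N \<Longrightarrow> Qf k (PP N k s) (PP N k i) (PP N k u) = 0"
  by (subst Qoff) (auto simp: sgP)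


lemma ex_off: "k < N \<Longrightarrow> k' < N \<Longrightarrow> \<exists>s<N. k' = PP N k s"
proof -
  assume kN: "k < N" and k'N: "k' < N"
  have "PP N k ((k' + (N - k)) mod N) = (k + (k' + (N - k))) mod N" unfolding PP_def by (simp add: mod_add_right_eq)
  also have "k + (k' + (N - k)) = k' + N" using kN by simp
  finally have "PP N k ((k' + (N - k)) mod N) = k'" using k'N by simp
  moreover have "(k' + (N - k)) mod N < N" using kN by simp
  ultimately show ?thesis by metis
qed

lemma back_off: "k < N \<Longrightarrow> 1 \<le> s \<Longrightarrow> s < N \<Longrightarrow> PP N (PP N k s) (N - s) = k"
proof -
  assume kN: "k < N" and s1: "1 \<le> s" and sN: "s < N"
  have "PP N (PP N k s) (N - s) = (k + s + (N - s)) mod N" unfolding PP_def by (simp add: mod_add_left_eq)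
  also have "k + s + (N - s) = k + N" using sN by simp
  finally show ?thesis using kN by simp
qed

lemma clauseZ:
  assumes kN: "k < N" and k'N: "k' < N" and i1: "1 \<le> i" and im: "i \<le> m" and j1: "1 \<le> j" and jm: "j \<le> m"
    and mN: "2 * m + 2 \<le> N" and al: "\<alpha> \<noteq> 0"
    and nl1: "\<not> listed N (Cc i k) (Cc j k')" and nl2: "\<not> listed N (Cc j k') (Cc i k)"
  shows "rtbr N m \<alpha> d c (Cc i k) (Cc j k') = 0"
proof -
  obtain s where sN: "s < N" and k'e: "k' = PP N k s" using ex_off[OF kN k'N] by blast
  have A1: "s \<noteq> i"
  proof
    assume "s = i"
    then have "listed N (Cc i k) (Cc j k')" unfolding listed_def k'e PP_def by blast
    then show False using nl1 by simp
  qed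
  have A2: "\<not> (i \<le> j \<and> 1 \<le> s \<and> s \<le> i - 1)"
  proof
    assume h: "i \<le> j \<and> 1 \<le> s \<and> s \<le> i - 1"
    then have "listed N (Cc i k) (Cc j k')" unfolding listed_def k'e PP_def by blast
    then show False using nl1 by simp
  qed
  have A3: "\<not> (j \<le> i \<and> i - j + 1 \<le> s \<and> s \<le> i - 1)"
  proof
    assume h: "j \<le> i \<and> i - j + 1 \<le> s \<and> s \<le> i - 1"
    then have "listed N (Cc i k) (Cc j k')" unfolding listed_def k'e PP_def by blast
    then show False using nl1 by simp
  qed
  have ke: "k = PP N k' (N - s)" if "1 \<le> s" using back_off[OF kN that sN] k'e by simp
  have B1: "N - s \<noteq> j" if "1 \<le> s"
  proof
    assume "N - s = j"
    then have "listed N (Cc j k') (Cc i k)" unfolding listed_def using ke[OF that] unfolding PP_def by blast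
    then show False using nl2 by simp
  qed
  have B2: "\<not> (j \<le> i \<and> 1 \<le> N - s \<and> N - s \<le> j - 1)" if "1 \<le> s"
  proof
    assume h: "j \<le> i \<and> 1 \<le> N - s \<and> N - s \<le> j - 1"
    then have "listed N (Cc j k') (Cc i k)" unfolding listed_def using ke[OF that] unfolding PP_def by blast
    then show False using nl2 by simp
  qed
  have B3: "\<not> (i \<le> j \<and> j - i + 1 \<le> N - s \<and> N - s \<le> j - 1)" if "1 \<le> s"
  proof
    assume h: "i \<le> j \<and> j - i + 1 \<le> N - s \<and> N - s \<le> j - 1"
    then have "listed N (Cc j k') (Cc i k)" unfolding listed_def using ke[OF that] unfolding PP_def by blast
    then show False using nl2 by simp
  qed
  have iN: "i < N" using im mN by simp
  note M = master_off[OF kN sN i1 im j1 jm mN al refl, of d c]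
  have "rtbr N m \<alpha> d c (Cc i k) (Cc j (PP N k s)) = 0"
  proof (cases "s = 0")
    case True
    then have P0e: "PP N k s = k" using PP0[OF kN] by simp
    show ?thesis
    proof (cases "j < i")
      case True
      have Q: "Qf k (PP N k s) (PP N k i) (PP N k (s + j)) = 2" using QZ0a[OF kN _ True iN] j1 \<open>s = 0\<close> by simp
      have u: "ut \<alpha> c (i - (i - j)) k = - \<alpha> * c j k" unfolding ut_def using True j1 by simp
      have w: "1 \<le> i - j \<and> i - j \<le> i" "i - j + j = i" "j < i" using True by auto
      show ?thesis using M[unfolded \<open>s = 0\<close>] Q[unfolded \<open>s = 0\<close>] w PP0[OF kN] al im u unfolding \<open>s = 0\<close> by (simp add: field_simps)
    next
      case False
      have Q: "Qf k (PP N k s) (PP N k i) (PP N k (s + j)) = 0" using QZ0b[OF kN _ _ _] i1 False jm mN \<open>s = 0\<close> by simp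
      have "\<not> (i + N - j \<le> i)" using jm mN by simp
      then show ?thesis using M[unfolded \<open>s = 0\<close>] Q[unfolded \<open>s = 0\<close>] False unfolding \<open>s = 0\<close> by simp
    qed
  next
    case False
    then have s1: "1 \<le> s" by simp
    consider (Z1) "s \<le> i" | (Z2) "i < s" "s + j < N" | (Z3) "N \<le> s + j" by linarith
    then show ?thesis
    proof cases
      case Z1
      have ji: "j < i" and sji: "s + j \<le> i" using A1 A2 A3 Z1 s1 by auto
      show ?thesis
      proof (cases "s + j < i")
        case True
        have Q: "Qf k (PP N k s) (PP N k i) (PP N k (s + j)) = 0" by (rule QZ1a) (use kN s1 j1 True iN in auto)
        have c1: "1 \<le> i - j - s \<and> i - j - s \<le> i" "i - (i - j - s) = s + j" "i - j - s + j = i - s" "s + j \<le> m"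
          using True im by auto
        have u1: "ut \<alpha> c (i - s) (PP N k s) = - \<alpha> * c (i - s) (PP N k s)" unfolding ut_def using Z1 A1 by simp
        have u2: "ut \<alpha> c (s + j) k = - \<alpha> * c (s + j) k" "ut \<alpha> c (j + s) k = - \<alpha> * c (s + j) k" unfolding ut_def using j1 by (simp_all add: add.commute)
        have "i - s \<le> m" using im by simp
        then show ?thesis using True c1 u1 u2 s1 Z1 Q M by simp
      next
        case False
        then have e: "s + j = i" using sji by simp
        have Q: "Qf k (PP N k s) (PP N k i) (PP N k (s + j)) = -2"
          unfolding e by (rule QZ1b) (use kN s1 Z1 A1 iN in auto)
        have q0e: "N = (if s + j < i then i - j - s else i + N - s - j)" using e by auto
        have c: "\<not> (1 \<le> N \<and> N \<le> i)" using iN by simp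
        have c': "1 \<le> s \<and> s \<le> i" using s1 Z1 by simp
        have c'': "s + j \<le> m" using e im by simp
        have isj: "i - s = j" using e by arith
        have u1: "ut \<alpha> c (i - s) (PP N k s) = - \<alpha> * c j (PP N k s)" unfolding ut_def isj using j1 by simp
        have r: "rtbr N m \<alpha> d c (Cc i k) (Cc j (PP N k s)) = (ut \<alpha> c (i - s) (PP N k s) * (- \<alpha> * c (s + j) k) - 0) / \<alpha>
            + \<alpha> / 2 * c i k * c j (PP N k s) * Qf k (PP N k s) (PP N k i) (PP N k (s + j))"
          using master_off[OF kN sN i1 im j1 jm mN al q0e, of d c] unfolding if_not_P[OF c] if_P[OF c'] if_P[OF c''] .
        show ?thesis unfolding r Q u1 using e al by (simp add: field_simps)
      qed
    next
      case Z2
      have Q: "Qf k (PP N k s) (PP N k i) (PP N k (s + j)) = 0" by (rule QZ2) (use kN i1 Z2 j1 in auto)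
      have q0e: "i + N - s - j = (if s + j < i then i - j - s else i + N - s - j)" using Z2 by auto
      have c: "\<not> (1 \<le> i + N - s - j \<and> i + N - s - j \<le> i)" using Z2 by auto
      have c': "\<not> (1 \<le> s \<and> s \<le> i)" using Z2 by simp
      have r: "rtbr N m \<alpha> d c (Cc i k) (Cc j (PP N k s)) = (0 - 0) / \<alpha>
            + \<alpha> / 2 * c i k * c j (PP N k s) * Qf k (PP N k s) (PP N k i) (PP N k (s + j))"
        using master_off[OF kN sN i1 im j1 jm mN al q0e, of d c] unfolding if_not_P[OF c] if_not_P[OF c'] .
      show ?thesis unfolding r Q by simp
    next
      case Z3
      have ij: "i < j" and t: "N - s \<le> j - i" using B1[OF s1] B2[OF s1] B3[OF s1] Z3 sN by auto
      have e: "PP N k (s + j) = PP N k (s + j - N)"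
        unfolding PP_def using Z3 by (metis add.assoc le_add_diff_inverse2 mod_add_self2)
      have Q: "Qf k (PP N k s) (PP N k i) (PP N k (s + j)) = 0"
        unfolding e by (rule QZ3) (use kN i1 t ij sN Z3 jm mN in auto)
      have q0e: "i + N - s - j = (if s + j < i then i - j - s else i + N - s - j)" using t ij Z3 sN jm mN by auto
      have c: "\<not> (1 \<le> i + N - s - j \<and> i + N - s - j \<le> i)" using t ij Z3 by auto
      have c': "\<not> (1 \<le> s \<and> s \<le> i)" using t ij Z3 sN jm mN by auto
      have r: "rtbr N m \<alpha> d c (Cc i k) (Cc j (PP N k s)) = (0 - 0) / \<alpha>
            + \<alpha> / 2 * c i k * c j (PP N k s) * Qf k (PP N k s) (PP N k i) (PP N k (s + j))"
        using master_off[OF kN sN i1 im j1 jm mN al q0e, of d c] unfolding if_not_P[OF c] if_not_P[OF c'] .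
      show ?thesis unfolding r Q by simp
    qed
  qed
  then show ?thesis unfolding k'e .
qed


theorem mainTheorem16:
  fixes N m :: nat and \<alpha> :: real and d :: "nat \<Rightarrow> real" and c :: "nat \<Rightarrow> nat \<Rightarrow> real"
  assumes "m \<ge> 1" and "N \<ge> 2 * m + 2" and "\<alpha> \<noteq> 0"
  shows
   "(\<forall>x. valid_coord N m x \<longrightarrow> (\<exists>!G. has_grad N (coordfun N \<alpha> x) (RTpt N m \<alpha> d c) G))
  \<and> (\<forall>k l. k < N \<longrightarrow> l < N \<longrightarrow> rtbr N m \<alpha> d c (Dc k) (Dc l) = 0)
  \<and> (\<forall>k j. k < N \<longrightarrow> 1 \<le> j \<longrightarrow> j \<le> m \<longrightarrow>
        rtbr N m \<alpha> d c (Dc k) (Cc j k) = - c j k * (1 + \<alpha> * d k))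
  \<and> (\<forall>k j. k < N \<longrightarrow> 1 \<le> j \<longrightarrow> j \<le> m \<longrightarrow>
        rtbr N m \<alpha> d c (Cc j k) (Dc ((k + j) mod N)) = - c j k * (1 + \<alpha> * d ((k + j) mod N)))
  \<and> (\<forall>i j k. k < N \<longrightarrow> 1 \<le> i \<longrightarrow> i \<le> m \<longrightarrow> 1 \<le> j \<longrightarrow> j \<le> m \<longrightarrow>
        rtbr N m \<alpha> d c (Cc i k) (Cc j ((k + i) mod N))
          = - cv m c (i + j) k - \<alpha> * c i k * c j ((k + i) mod N))
  \<and> (\<forall>i j k l. k < N \<longrightarrow> 1 \<le> i \<longrightarrow> i \<le> j \<longrightarrow> j \<le> m \<longrightarrow> 1 \<le> l \<longrightarrow> l \<le> i - 1 \<longrightarrow>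
        rtbr N m \<alpha> d c (Cc i k) (Cc j ((k + l) mod N))
          = - \<alpha> * c i k * c j ((k + l) mod N) + \<alpha> * cv m c (j + l) k * cv m c (i - l) ((k + l) mod N))
  \<and> (\<forall>i j k l. k < N \<longrightarrow> 1 \<le> i \<longrightarrow> i \<le> j \<longrightarrow> j \<le> m \<longrightarrow> j - i + 1 \<le> l \<longrightarrow> l \<le> j - 1 \<longrightarrow>
        rtbr N m \<alpha> d c (Cc j k) (Cc i ((k + l) mod N))
          = - \<alpha> * c j k * c i ((k + l) mod N) + \<alpha> * cv m c (i + l) k * cv m c (j - l) ((k + l) mod N))
  \<and> (\<forall>x y. valid_coord N m x \<longrightarrow> valid_coord N m y \<longrightarrow> \<not> listed N x y \<longrightarrow> \<not> listed N y x \<longrightarrow>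
        rtbr N m \<alpha> d c x y = 0)"
proof -
  have mN: "2 * m + 2 \<le> N" using assms(2) by simp
  have al: "\<alpha> \<noteq> 0" using assms(3) .
  have neqK: "k \<noteq> (k + j) mod N" if "k < N" "1 \<le> j" "j \<le> m" for k j
  proof
    assume h: "k = (k + j) mod N"
    have "PP N k 0 = PP N k j" using h PP0[OF that(1)] unfolding PP_def by simp
    then have "0 = j" using eq_off[OF that(1), of 0 j] that mN by simp
    then show False using that by simp
  qed
  have P1: "\<forall>x. valid_coord N m x \<longrightarrow> (\<exists>!G. has_grad N (coordfun N \<alpha> x) (RTpt N m \<alpha> d c) G)"
    using unique_grad al by blast
  have P2: "\<forall>k l. k < N \<longrightarrow> l < N \<longrightarrow> rtbr N m \<alpha> d c (Dc k) (Dc l) = 0"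
    using br_DD al by blast
  have P3: "\<forall>k j. k < N \<longrightarrow> 1 \<le> j \<longrightarrow> j \<le> m \<longrightarrow>
        rtbr N m \<alpha> d c (Dc k) (Cc j k) = - c j k * (1 + \<alpha> * d k)"
  proof (intro allI impI)
    fix k j assume h: "k < N" "1 \<le> j" "j \<le> m"
    show "rtbr N m \<alpha> d c (Dc k) (Cc j k) = - c j k * (1 + \<alpha> * d k)"
      using br_DC[OF h(1) h(1) h(2) h(3) al, of d c] neqK[OF h] by (simp add: algebra_simps)
  qed
  have P4: "\<forall>k j. k < N \<longrightarrow> 1 \<le> j \<longrightarrow> j \<le> m \<longrightarrow>
        rtbr N m \<alpha> d c (Cc j k) (Dc ((k + j) mod N)) = - c j k * (1 + \<alpha> * d ((k + j) mod N))"
  proof (intro allI impI)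
    fix k j assume h: "k < N" "1 \<le> j" "j \<le> m"
    have aN: "(k + j) mod N < N" using h(1) by simp
    show "rtbr N m \<alpha> d c (Cc j k) (Dc ((k + j) mod N)) = - c j k * (1 + \<alpha> * d ((k + j) mod N))"
      using br_CD[OF aN h(1) h(2) h(3) al, of d c] neqK[OF h] by (simp add: algebra_simps)
  qed
  have P5: "\<forall>i j k. k < N \<longrightarrow> 1 \<le> i \<longrightarrow> i \<le> m \<longrightarrow> 1 \<le> j \<longrightarrow> j \<le> m \<longrightarrow>
        rtbr N m \<alpha> d c (Cc i k) (Cc j ((k + i) mod N))
          = - cv m c (i + j) k - \<alpha> * c i k * c j ((k + i) mod N)"
    using clauseA mN al by blast
  have P6: "\<forall>i j k l. k < N \<longrightarrow> 1 \<le> i \<longrightarrow> i \<le> j \<longrightarrow> j \<le> m \<longrightarrow> 1 \<le> l \<longrightarrow> l \<le> i - 1 \<longrightarrow>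
        rtbr N m \<alpha> d c (Cc i k) (Cc j ((k + l) mod N))
          = - \<alpha> * c i k * c j ((k + l) mod N) + \<alpha> * cv m c (j + l) k * cv m c (i - l) ((k + l) mod N)"
    using clauseB mN al by blast
  have P7: "\<forall>i j k l. k < N \<longrightarrow> 1 \<le> i \<longrightarrow> i \<le> j \<longrightarrow> j \<le> m \<longrightarrow> j - i + 1 \<le> l \<longrightarrow> l \<le> j - 1 \<longrightarrow>
        rtbr N m \<alpha> d c (Cc j k) (Cc i ((k + l) mod N))
          = - \<alpha> * c j k * c i ((k + l) mod N) + \<alpha> * cv m c (i + l) k * cv m c (j - l) ((k + l) mod N)"
    using clauseC mN al by blast
  have P8: "\<forall>x y. valid_coord N m x \<longrightarrow> valid_coord N m y \<longrightarrow> \<not> listed N x y \<longrightarrow> \<not> listed N y x \<longrightarrow>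
        rtbr N m \<alpha> d c x y = 0"
  proof (intro allI impI)
    fix x y assume vx: "valid_coord N m x" and vy: "valid_coord N m y"
      and n1: "\<not> listed N x y" and n2: "\<not> listed N y x"
    show "rtbr N m \<alpha> d c x y = 0"
    proof (cases x)
      case (Dc a)
      show ?thesis
      proof (cases y)
        case (Dc b)
        then show ?thesis using \<open>x = Dc a\<close> vx vy br_DD al unfolding valid_coord_def by auto
      next
        case (Cc j k)
        have h: "a < N" "1 \<le> j" "j \<le> m" "k < N" using vx vy \<open>x = Dc a\<close> Cc unfolding valid_coord_def by auto
        have "a \<noteq> k"
        proof
          assume "a = k"
          then have "listed N x y" unfolding listed_def \<open>x = Dc a\<close> Cc by (intro disjI1 exI conjI) simp_all
          then show False using n1 by simp
        qed
        moreover have "a \<noteq> (k + j) mod N"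
        proof
          assume "a = (k + j) mod N"
          then have "listed N y x" unfolding listed_def \<open>x = Dc a\<close> Cc by (intro disjI2 disjI1 exI conjI) simp_all
          then show False using n2 by simp
        qed
        ultimately show ?thesis using br_DC[OF h(1) h(4) h(2) h(3) al, of d c] \<open>x = Dc a\<close> Cc by simp
      qed
    next
      case (Cc i k)
      show ?thesis
      proof (cases y)
        case (Dc a)
        have h: "a < N" "1 \<le> i" "i \<le> m" "k < N" using vx vy \<open>x = Cc i k\<close> Dc unfolding valid_coord_def by auto
        have "a \<noteq> k"
        proof
          assume "a = k"
          then have "listed N y x" unfolding listed_def \<open>x = Cc i k\<close> Dc by (intro disjI1 exI conjI) simp_all
          then show False using n2 by simp
        qed
        moreover have "a \<noteq> (k + i) mod N"
        proof
          assume "a = (k + i) mod N"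
          then have "listed N x y" unfolding listed_def \<open>x = Cc i k\<close> Dc by (intro disjI2 disjI1 exI conjI) simp_all
          then show False using n1 by simp
        qed
        ultimately show ?thesis using br_CD[OF h(1) h(4) h(2) h(3) al, of d c] \<open>x = Cc i k\<close> Dc by simp
      next
        case (Cc j k')
        have h: "k < N" "k' < N" "1 \<le> i" "i \<le> m" "1 \<le> j" "j \<le> m"
          using vx vy \<open>x = Cc i k\<close> Cc unfolding valid_coord_def by auto
        show ?thesis using clauseZ[OF h mN al, of d c] n1 n2 \<open>x = Cc i k\<close> Cc by simp
      qed
    qed
  qed
  show ?thesis using P1 P2 P3 P4 P5 P6 P7 P8 by blast
qed


end
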